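(* Let $A=\sigma(R)\langle x_1,\dots,x_n\rangle$ be a bijective skew PBW extension over a ring $R$, with associated endomorphisms $\sigma_i$ and $\sigma_i$-derivations $\delta_i$. Then the opposite ring $A^{\mathrm{op}}$ is a bijective skew PBW extension over $R^{\mathrm{op}}$. Moreover, for $A^{\mathrm{op}}$ the associated automorphisms are $\sigma_i^{\mathrm{op}}:R^{\mathrm{op}}\to R^{\mathrm{op}}$, $\sigma_i^{\mathrm{op}}(r)=\sigma_i^{-1}(r)$, and the associated $\sigma_i^{\mathrm{op}}$-derivations are $\delta_i^{\mathrm{op}}:R^{\mathrm{op}}\to R^{\mathrm{op}}$, $\delta_i^{\mathrm{op}}(r)=-\delta_i(\sigma_i^{-1}(r))$, for $r\in R^{\mathrm{op}}$, $1\le i\le n$.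
   Context: Rings are associative with unity, not necessarily commutative. Given rings $R\subseteq A$, $A$ is a skew PBW extension over $R$, written $A=\sigma(R)\langle x_1,\dots,x_n\rangle$, if: (i) $R\subseteq A$; (ii) there are elements $x_1,\dots,x_n\in A$ such that $A$ is a free left $R$-module with basis $\mathrm{Mon}(A)=\{x_1^{\alpha_1}\cdots x_n^{\alpha_n}\mid (\alpha_1,\dots,\alpha_n)\in\mathbb{N}^n\}$; (iii) for each $1\le i\le n$ and each $r\in R\setminus\{0\}$ there is $c_{i,r}\in R\setminus\{0\}$ with $x_ir-c_{i,r}x_i\in R$; (iv) for all $1\le i,j\le n$ there is $c_{i,j}\in R\setminus\{0\}$ with $x_jx_i-c_{i,j}x_ix_j\in R+Rx_1+\cdots+Rx_n$. For such $A$, for each $i$ there exist an injective ring endomorphism $\sigma_i$ of $R$ and a $\sigma_i$-derivation $\delta_i$ of $R$ (i.e. additive with $\delta_i(rs)=\sigma_i(r)\delta_i(s)+\delta_i(r)s$) such that $x_ir=\sigma_i(r)x_i+\delta_i(r)$ for all $r\in R$. $A$ is called bijective if every $\sigma_i$ is bijective and the elements $c_{i,j}$ are invertible for $1\le i<j\le n$. The opposite ring $B^{\mathrm{op}}$ of $B$ has the same additive group and product $a*b=ba$. *)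

theory Defs
  imports "HOL-Algebra.Algebra"
begin

definition opp_ring :: "('a, 'b) ring_scheme \<Rightarrow> ('a, 'b) ring_scheme" where
  "opp_ring A = A\<lparr>mult := (\<lambda>a b. b \<otimes>\<^bsub>A\<^esub> a)\<rparr>"

definition exps :: "nat \<Rightarrow> (nat \<Rightarrow> nat) set" where
  "exps n = {\<alpha>. \<forall>i. i \<notin> {1..n} \<longrightarrow> \<alpha> i = 0}"

definition mon :: "('a, 'b) ring_scheme \<Rightarrow> (nat \<Rightarrow> 'a) \<Rightarrow> nat \<Rightarrow> (nat \<Rightarrow> nat) \<Rightarrow> 'a" where
  "mon A x n \<alpha> = foldr (\<lambda>i acc. (x i [^]\<^bsub>A\<^esub> (\<alpha> i)) \<otimes>\<^bsub>A\<^esub> acc) [1..<Suc n] \<one>\<^bsub>A\<^esub>"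

definition lin_span :: "('a, 'b) ring_scheme \<Rightarrow> 'a set \<Rightarrow> (nat \<Rightarrow> 'a) \<Rightarrow> nat \<Rightarrow> 'a set" where
  "lin_span A R x n = {r0 \<oplus>\<^bsub>A\<^esub> (\<Oplus>\<^bsub>A\<^esub>k\<in>{1..n}. r k \<otimes>\<^bsub>A\<^esub> x k) | r0 r. r0 \<in> R \<and> (\<forall>k\<in>{1..n}. r k \<in> R)}"

definition skew_PBW :: "('a, 'b) ring_scheme \<Rightarrow> 'a set \<Rightarrow> (nat \<Rightarrow> 'a) \<Rightarrow> nat \<Rightarrow> bool" where
  "skew_PBW A R x n \<longleftrightarrow>
     ring A \<and> subring R A \<and>
     (\<forall>i\<in>{1..n}. x i \<in> carrier A) \<and>
     \<comment> \<open>(ii) A is a free left R-module with basis Mon(A)\<close>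
     (\<forall>a\<in>carrier A. \<exists>!c. (\<forall>\<alpha>. c \<alpha> \<in> R) \<and> (\<forall>\<alpha>. \<alpha> \<notin> exps n \<longrightarrow> c \<alpha> = \<zero>\<^bsub>A\<^esub>) \<and>
         finite {\<alpha>. c \<alpha> \<noteq> \<zero>\<^bsub>A\<^esub>} \<and>
         a = (\<Oplus>\<^bsub>A\<^esub>\<alpha>\<in>{\<alpha>. c \<alpha> \<noteq> \<zero>\<^bsub>A\<^esub>}. c \<alpha> \<otimes>\<^bsub>A\<^esub> mon A x n \<alpha>)) \<and>
     \<comment> \<open>(iii)\<close>
     (\<forall>i\<in>{1..n}. \<forall>r\<in>R - {\<zero>\<^bsub>A\<^esub>}. \<exists>c\<in>R - {\<zero>\<^bsub>A\<^esub>}.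
         x i \<otimes>\<^bsub>A\<^esub> r \<ominus>\<^bsub>A\<^esub> c \<otimes>\<^bsub>A\<^esub> x i \<in> R) \<and>
     \<comment> \<open>(iv)\<close>
     (\<forall>i\<in>{1..n}. \<forall>j\<in>{1..n}. \<exists>c\<in>R - {\<zero>\<^bsub>A\<^esub>}.
         x j \<otimes>\<^bsub>A\<^esub> x i \<ominus>\<^bsub>A\<^esub> c \<otimes>\<^bsub>A\<^esub> x i \<otimes>\<^bsub>A\<^esub> x j \<in> lin_span A R x n)"

definition assoc_maps :: "('a, 'b) ring_scheme \<Rightarrow> 'a set \<Rightarrow> (nat \<Rightarrow> 'a) \<Rightarrow> nat
    \<Rightarrow> (nat \<Rightarrow> 'a \<Rightarrow> 'a) \<Rightarrow> (nat \<Rightarrow> 'a \<Rightarrow> 'a) \<Rightarrow> bool" where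
  "assoc_maps A R x n \<sigma> \<delta> \<longleftrightarrow>
     (\<forall>i\<in>{1..n}. \<forall>r\<in>R. \<sigma> i r \<in> R \<and> \<delta> i r \<in> R \<and>
        x i \<otimes>\<^bsub>A\<^esub> r = \<sigma> i r \<otimes>\<^bsub>A\<^esub> x i \<oplus>\<^bsub>A\<^esub> \<delta> i r)"

definition bijective_skew_PBW :: "('a, 'b) ring_scheme \<Rightarrow> 'a set \<Rightarrow> (nat \<Rightarrow> 'a) \<Rightarrow> nat \<Rightarrow> bool" where
  "bijective_skew_PBW A R x n \<longleftrightarrow>
     skew_PBW A R x n \<and>
     (\<forall>\<sigma> \<delta>. assoc_maps A R x n \<sigma> \<delta> \<longrightarrow> (\<forall>i\<in>{1..n}. bij_betw (\<sigma> i) R R)) \<and>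
     (\<forall>i\<in>{1..n}. \<forall>j\<in>{1..n}. \<forall>c\<in>R - {\<zero>\<^bsub>A\<^esub>}. i < j \<longrightarrow>
         x j \<otimes>\<^bsub>A\<^esub> x i \<ominus>\<^bsub>A\<^esub> c \<otimes>\<^bsub>A\<^esub> x i \<otimes>\<^bsub>A\<^esub> x j \<in> lin_span A R x n \<longrightarrow>
         (\<exists>d\<in>R. c \<otimes>\<^bsub>A\<^esub> d = \<one>\<^bsub>A\<^esub> \<and> d \<otimes>\<^bsub>A\<^esub> c = \<one>\<^bsub>A\<^esub>))"

end

theory Submission
  imports Defs
begin


lemma opp_simps [simp]:
  "carrier (opp_ring A) = carrier A"
  "(\<oplus>\<^bsub>opp_ring A\<^esub>) = (\<oplus>\<^bsub>A\<^esub>)"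
  "\<zero>\<^bsub>opp_ring A\<^esub> = \<zero>\<^bsub>A\<^esub>"
  "\<one>\<^bsub>opp_ring A\<^esub> = \<one>\<^bsub>A\<^esub>"
  "a \<otimes>\<^bsub>opp_ring A\<^esub> b = b \<otimes>\<^bsub>A\<^esub> a"
  by (simp_all add: opp_ring_def)

lemma opp_add_monoid [simp]: "add_monoid (opp_ring A) = add_monoid A"
  by (simp add: opp_ring_def)

lemma opp_a_inv [simp]: "a_inv (opp_ring A) = a_inv A"
  by (simp add: a_inv_def)

lemma opp_a_minus [simp]: "a_minus (opp_ring A) = a_minus A"
  by (simp add: a_minus_def[abs_def])

lemma opp_finsum [simp]: "finsum (opp_ring A) = finsum A"
  by (simp add: finsum_def[abs_def])

lemma (in ring) opp_ring: "ring (opp_ring R)"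
proof (rule ringI)
  show "abelian_group (opp_ring R)"
    unfolding abelian_group_def abelian_group_axioms_def abelian_monoid_def
    using is_abelian_group
    unfolding abelian_group_def abelian_group_axioms_def abelian_monoid_def by simp
  show "monoid (opp_ring R)"
    by (rule monoidI) (auto simp: m_assoc)
qed (auto simp: l_distr r_distr)

lemma (in ring) opp_pow: "a \<in> carrier R \<Longrightarrow> a [^]\<^bsub>opp_ring R\<^esub> (k::nat) = a [^] k"
  by (induct k) (auto simp: opp_ring_def, metis nat_pow_Suc nat_pow_Suc2)

lemma (in ring) opp_subring: "subring H R \<Longrightarrow> subring H (opp_ring R)"
proof -
  assume H: "subring H R"
  interpret O: ring "opp_ring R" by (rule opp_ring)
  show ?thesis
    by (rule O.subringI) (use H subringE[OF H] in auto)
qed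


locale spbw = ring A for A (structure) +
  fixes R :: "'a set" and x :: "nat \<Rightarrow> 'a" and n :: nat and \<sigma> \<delta> :: "nat \<Rightarrow> 'a \<Rightarrow> 'a"
  assumes sub: "subring R A"
  and xc: "\<forall>i\<in>{1..n}. x i \<in> carrier A"
  and free: "\<forall>a\<in>carrier A. \<exists>!c. (\<forall>\<alpha>. c \<alpha> \<in> R) \<and> (\<forall>\<alpha>. \<alpha> \<notin> exps n \<longrightarrow> c \<alpha> = \<zero>) \<and>
         finite {\<alpha>. c \<alpha> \<noteq> \<zero>} \<and>
         a = (\<Oplus>\<alpha>\<in>{\<alpha>. c \<alpha> \<noteq> \<zero>}. c \<alpha> \<otimes> mon A x n \<alpha>)"
  and rel: "\<forall>i\<in>{1..n}. \<forall>j\<in>{1..n}. \<exists>c\<in>R - {\<zero>}.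
         x j \<otimes> x i \<ominus> c \<otimes> x i \<otimes> x j \<in> lin_span A R x n"
  and am: "assoc_maps A R x n \<sigma> \<delta>"
  and sbij: "\<forall>i\<in>{1..n}. bij_betw (\<sigma> i) R R"
  and cunit: "\<forall>i\<in>{1..n}. \<forall>j\<in>{1..n}. \<forall>c\<in>R - {\<zero>}. i < j \<longrightarrow>
         x j \<otimes> x i \<ominus> c \<otimes> x i \<otimes> x j \<in> lin_span A R x n \<longrightarrow>
         (\<exists>d\<in>R. c \<otimes> d = \<one> \<and> d \<otimes> c = \<one>)"
begin

abbreviation M where "M \<alpha> \<equiv> mon A x n \<alpha>"

lemma Rc: "R \<subseteq> carrier A" using subringE(1)[OF sub] .
lemma R0[simp]: "\<zero> \<in> R" using subringE(2)[OF sub] .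
lemma R1[simp]: "\<one> \<in> R" using subringE(3)[OF sub] .
lemma Rm: "a \<in> R \<Longrightarrow> b \<in> R \<Longrightarrow> a \<otimes> b \<in> R" using subringE(6)[OF sub] by blast
lemma Ra: "a \<in> R \<Longrightarrow> b \<in> R \<Longrightarrow> a \<oplus> b \<in> R" using subringE(7)[OF sub] by blast
lemma Rn: "a \<in> R \<Longrightarrow> \<ominus> a \<in> R" using subringE(5)[OF sub] by blast
lemma Rs: "a \<in> R \<Longrightarrow> b \<in> R \<Longrightarrow> a \<ominus> b \<in> R" using Ra Rn by (simp add: a_minus_def)
lemma RC: "a \<in> R \<Longrightarrow> a \<in> carrier A" using Rc by blast
lemma xC: "i \<in> {1..n} \<Longrightarrow> x i \<in> carrier A" using xc by blast

lemma am': "i \<in> {1..n} \<Longrightarrow> r \<in> R \<Longrightarrow> \<sigma> i r \<in> R \<and> \<delta> i r \<in> R \<and> x i \<otimes> r = \<sigma> i r \<otimes> x i \<oplus> \<delta> i r"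
  using am unfolding assoc_maps_def by blast

lemma foldr_mon_carr: "set L \<subseteq> {1..n} \<Longrightarrow> a \<in> carrier A \<Longrightarrow>
   foldr (\<lambda>i acc. x i [^] (\<alpha> i :: nat) \<otimes> acc) L a \<in> carrier A"
  by (induct L) (auto intro!: m_closed nat_pow_closed xC)

lemma mon_carr[simp]: "M \<alpha> \<in> carrier A"
  unfolding mon_def by (rule foldr_mon_carr) auto

lemma foldr_skip: "set L \<subseteq> {1..n} \<Longrightarrow> \<forall>l\<in>set L. \<alpha> l = 0 \<Longrightarrow> a \<in> carrier A \<Longrightarrow>
   foldr (\<lambda>i acc. x i [^] (\<alpha> i :: nat) \<otimes> acc) L a = a"
  by (induct L) auto

lemma mon_zero: "M (\<lambda>_. 0) = \<one>"
  unfolding mon_def by (rule foldr_skip) auto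

lemma mon_step:
  assumes k: "k \<in> {1..n}" and z: "\<forall>l<k. \<beta> l = 0"
  shows "x k \<otimes> M \<beta> = M (\<beta>(k := Suc (\<beta> k)))"
proof -
  let ?f = "\<lambda>\<alpha>. (\<lambda>i acc. x i [^] (\<alpha> i :: nat) \<otimes> acc)"
  let ?b = "\<beta>(k := Suc (\<beta> k))"
  have L: "[1..<Suc n] = [1..<k] @ k # [Suc k..<Suc n]"
  proof -
    have "[1..<Suc n] = [1..<k] @ [k..<Suc n]"
      using k upt_add_eq_append[of 1 k "Suc n - k"] by auto
    moreover have "[k..<Suc n] = k # [Suc k..<Suc n]" using k upt_conv_Cons by auto
    ultimately show ?thesis by simp
  qed
  have c: "foldr (?f \<beta>) [Suc k..<Suc n] \<one> = foldr (?f ?b) [Suc k..<Suc n] \<one>"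
    by (rule foldr_cong) auto
  have cc: "foldr (?f \<beta>) [Suc k..<Suc n] \<one> \<in> carrier A"
    by (rule foldr_mon_carr) (use k in auto)
  have s1: "foldr (?f \<beta>) [1..<k] a = a" if "a \<in> carrier A" for a
    by (rule foldr_skip) (use k z that in auto)
  have s2: "foldr (?f ?b) [1..<k] a = a" if "a \<in> carrier A" for a
    by (rule foldr_skip) (use k z that in auto)
  have xk: "x k \<in> carrier A" using k xC by blast
  show ?thesis
    unfolding mon_def L foldr_append
    apply (simp only: foldr.simps o_def)
    apply (subst s1, use cc xk in simp)
    apply (subst s2, use cc c xk in simp)
    apply (simp only: c[symmetric] fun_upd_same)
    apply (subst nat_pow_Suc2[OF xk])
    apply (rule m_assoc[symmetric])
    using cc xk by auto
qed


definition lc :: "((nat \<Rightarrow> nat) \<Rightarrow> 'a) \<Rightarrow> (nat \<Rightarrow> nat) set \<Rightarrow> 'a" where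
  "lc c S = (\<Oplus>\<alpha>\<in>S. c \<alpha> \<otimes> M \<alpha>)"

definition Pc :: "((nat \<Rightarrow> nat) \<Rightarrow> 'a) \<Rightarrow> bool" where
  "Pc c \<longleftrightarrow> (\<forall>\<alpha>. c \<alpha> \<in> R) \<and> (\<forall>\<alpha>. \<alpha> \<notin> exps n \<longrightarrow> c \<alpha> = \<zero>) \<and> finite {\<alpha>. c \<alpha> \<noteq> \<zero>}"

definition coef :: "'a \<Rightarrow> (nat \<Rightarrow> nat) \<Rightarrow> 'a" where
  "coef a = (THE c. Pc c \<and> a = lc c {\<alpha>. c \<alpha> \<noteq> \<zero>})"

definition ext :: "((nat \<Rightarrow> nat) \<Rightarrow> 'a) \<Rightarrow> (nat \<Rightarrow> nat) set \<Rightarrow> (nat \<Rightarrow> nat) \<Rightarrow> 'a" where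
  "ext c S = (\<lambda>\<alpha>. if \<alpha> \<in> S then c \<alpha> else \<zero>)"

lemma free': "a \<in> carrier A \<Longrightarrow> \<exists>!c. Pc c \<and> a = lc c {\<alpha>. c \<alpha> \<noteq> \<zero>}"
  using free unfolding Pc_def lc_def by blast

lemma lc_carr: "\<forall>\<alpha>\<in>S. c \<alpha> \<in> R \<Longrightarrow> lc c S \<in> carrier A"
  unfolding lc_def by (rule finsum_closed) (auto simp: RC)

lemma lc_shrink:
  assumes "finite T" "S \<subseteq> T" "\<forall>\<alpha>\<in>T. c \<alpha> \<in> R" "\<forall>\<alpha>\<in>T - S. c \<alpha> = \<zero>"
  shows "lc c S = lc c T"
  unfolding lc_def
  by (rule add.finprod_mono_neutral_cong_left) (use assms in \<open>auto simp: RC\<close>)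

lemma lc_cong: "\<forall>\<alpha>\<in>S. c \<alpha> = d \<alpha> \<Longrightarrow> \<forall>\<alpha>\<in>S. c \<alpha> \<in> R \<Longrightarrow> lc c S = lc d S"
  unfolding lc_def by (rule finsum_cong') (auto simp: RC)

lemma ext_P:
  assumes "finite S" "S \<subseteq> exps n" "\<forall>\<alpha>\<in>S. c \<alpha> \<in> R"
  shows "Pc (ext c S)" "lc (ext c S) {\<alpha>. ext c S \<alpha> \<noteq> \<zero>} = lc c S"
proof -
  show "Pc (ext c S)" unfolding Pc_def ext_def using assms
    by (auto intro: finite_subset[OF _ assms(1)])
  have "lc (ext c S) {\<alpha>. ext c S \<alpha> \<noteq> \<zero>} = lc (ext c S) S"
    by (rule lc_shrink) (use assms in \<open>auto simp: ext_def\<close>)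
  also have "\<dots> = lc c S" by (rule lc_cong) (use assms in \<open>auto simp: ext_def\<close>)
  finally show "lc (ext c S) {\<alpha>. ext c S \<alpha> \<noteq> \<zero>} = lc c S" .
qed

lemma coef_lc:
  assumes "finite S" "S \<subseteq> exps n" "\<forall>\<alpha>\<in>S. c \<alpha> \<in> R"
  shows "coef (lc c S) = ext c S"
  unfolding coef_def
  by (rule the1_equality[OF free'[OF lc_carr]]) (use assms ext_P[OF assms] in auto)

lemma coef_rep:
  assumes "a \<in> carrier A"
  shows "Pc (coef a)" "a = lc (coef a) {\<alpha>. coef a \<alpha> \<noteq> \<zero>}"
  using theI'[OF free'[OF assms]] unfolding coef_def[symmetric] by auto

lemma coef_R: "a \<in> carrier A \<Longrightarrow> coef a \<alpha> \<in> R"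
  using coef_rep(1) unfolding Pc_def by blast

lemma coef_out: "a \<in> carrier A \<Longrightarrow> \<alpha> \<notin> exps n \<Longrightarrow> coef a \<alpha> = \<zero>"
  using coef_rep(1) unfolding Pc_def by blast

lemma coef_fin: "a \<in> carrier A \<Longrightarrow> finite {\<alpha>. coef a \<alpha> \<noteq> \<zero>}"
  using coef_rep(1) unfolding Pc_def by blast

lemma coef_supp: "a \<in> carrier A \<Longrightarrow> {\<alpha>. coef a \<alpha> \<noteq> \<zero>} \<subseteq> exps n"
  using coef_out by blast

lemma coef_rep_any:
  assumes "a \<in> carrier A" "finite U" "{\<alpha>. coef a \<alpha> \<noteq> \<zero>} \<subseteq> U"
  shows "a = lc (coef a) U"
  using coef_rep(2)[OF assms(1)] lc_shrink[OF assms(2,3)] coef_R[OF assms(1)] by auto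

lemma coef_eqI:
  assumes "a \<in> carrier A" "b \<in> carrier A" "\<And>\<alpha>. coef a \<alpha> = coef b \<alpha>"
  shows "a = b"
proof -
  have "coef a = coef b" using assms(3) by auto
  then show ?thesis using coef_rep(2)[OF assms(1)] coef_rep(2)[OF assms(2)] by simp
qed

lemma coef_zero: "coef \<zero> \<alpha> = \<zero>"
proof -
  have "lc (\<lambda>_. \<zero>) {} = \<zero>" by (simp add: lc_def)
  then show ?thesis using coef_lc[of "{}" "\<lambda>_. \<zero>"] by (simp add: ext_def)
qed

lemma coef_add:
  assumes "a \<in> carrier A" "b \<in> carrier A"
  shows "coef (a \<oplus> b) \<alpha> = coef a \<alpha> \<oplus> coef b \<alpha>"
proof -
  define U where "U = {\<alpha>. coef a \<alpha> \<noteq> \<zero>} \<union> {\<alpha>. coef b \<alpha> \<noteq> \<zero>}"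
  have U: "finite U" "U \<subseteq> exps n" unfolding U_def using assms coef_fin coef_supp by auto
  have ea: "a = lc (coef a) U" by (rule coef_rep_any) (use assms U in \<open>auto simp: U_def\<close>)
  have eb: "b = lc (coef b) U" by (rule coef_rep_any) (use assms U in \<open>auto simp: U_def\<close>)
  have "a \<oplus> b = lc (\<lambda>\<alpha>. coef a \<alpha> \<oplus> coef b \<alpha>) U"
    unfolding lc_def
    apply (subst ea, subst eb, unfold lc_def)
    apply (subst finsum_addf[symmetric])
    using U assms by (auto intro!: finsum_cong' simp: l_distr coef_R RC)
  then have "coef (a \<oplus> b) = ext (\<lambda>\<alpha>. coef a \<alpha> \<oplus> coef b \<alpha>) U"
    using coef_lc[OF U] assms by (simp add: coef_R Ra)
  then show ?thesis using assms by (auto simp: ext_def U_def coef_R RC)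
qed

lemma coef_smul:
  assumes "r \<in> R" "a \<in> carrier A"
  shows "coef (r \<otimes> a) \<alpha> = r \<otimes> coef a \<alpha>"
proof -
  define U where "U = {\<alpha>. coef a \<alpha> \<noteq> \<zero>}"
  have U: "finite U" "U \<subseteq> exps n" unfolding U_def using assms coef_fin coef_supp by auto
  have ea: "a = lc (coef a) U" by (rule coef_rep_any) (use assms U in \<open>auto simp: U_def\<close>)
  have "r \<otimes> a = lc (\<lambda>\<alpha>. r \<otimes> coef a \<alpha>) U"
    apply (subst ea, unfold lc_def)
    apply (subst finsum_rdistr)
    using U assms by (auto intro!: finsum_cong' simp: m_assoc coef_R RC)
  then have "coef (r \<otimes> a) = ext (\<lambda>\<alpha>. r \<otimes> coef a \<alpha>) U"
    using coef_lc[OF U] assms by (simp add: coef_R Rm)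
  then show ?thesis using assms by (auto simp: ext_def U_def coef_R RC)
qed

lemma coef_neg:
  assumes "a \<in> carrier A"
  shows "coef (\<ominus> a) \<alpha> = \<ominus> coef a \<alpha>"
proof -
  have "\<ominus> a = (\<ominus> \<one>) \<otimes> a" using assms by (simp add: l_minus)
  then show ?thesis using coef_smul[of "\<ominus> \<one>" a] assms by (simp add: Rn l_minus coef_R RC)
qed

lemma coef_minus:
  assumes "a \<in> carrier A" "b \<in> carrier A"
  shows "coef (a \<ominus> b) \<alpha> = coef a \<alpha> \<ominus> coef b \<alpha>"
  using assms by (simp add: a_minus_def coef_add coef_neg)

lemma coef_mon:
  assumes "\<beta> \<in> exps n"
  shows "coef (M \<beta>) \<alpha> = (if \<alpha> = \<beta> then \<one> else \<zero>)"
proof -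
  have "M \<beta> = lc (\<lambda>_. \<one>) {\<beta>}" by (simp add: lc_def)
  then show ?thesis using coef_lc[of "{\<beta>}" "\<lambda>_. \<one>"] assms by (simp add: ext_def)
qed

end

context spbw begin

definition dg :: "(nat \<Rightarrow> nat) \<Rightarrow> nat" where "dg \<alpha> = (\<Sum>i\<in>{1..n}. \<alpha> i)"

definition Lo :: "nat \<Rightarrow> 'a set" where
  "Lo m = {a \<in> carrier A. \<forall>\<alpha>. m \<le> dg \<alpha> \<longrightarrow> coef a \<alpha> = \<zero>}"

definition unitR :: "'a \<Rightarrow> bool" where
  "unitR u \<longleftrightarrow> u \<in> R \<and> (\<exists>v\<in>R. u \<otimes> v = \<one> \<and> v \<otimes> u = \<one>)"

lemma exps_upd: "\<beta> \<in> exps n \<Longrightarrow> k \<in> {1..n} \<Longrightarrow> \<beta>(k := v) \<in> exps n"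
  unfolding exps_def by auto

lemma exps_zero[simp]: "(\<lambda>_. 0) \<in> exps n" unfolding exps_def by auto

lemma dg_zero[simp]: "dg (\<lambda>_. 0) = 0" unfolding dg_def by simp

lemma dg_upd: assumes "k \<in> {1..n}" shows "dg (\<beta>(k := Suc (\<beta> k))) = Suc (dg \<beta>)"
proof -
  have "dg (\<beta>(k := Suc (\<beta> k))) = Suc (\<beta> k) + (\<Sum>i\<in>{1..n}-{k}. \<beta> i)"
    unfolding dg_def using assms by (simp add: sum.remove)
  also have "\<dots> = Suc (dg \<beta>)" unfolding dg_def using assms by (simp add: sum.remove)
  finally show ?thesis .
qed

lemma Lo_carr: "a \<in> Lo m \<Longrightarrow> a \<in> carrier A" unfolding Lo_def by auto

lemma Lo_zero[simp]: "\<zero> \<in> Lo m" unfolding Lo_def by (auto simp: coef_zero)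

lemma Lo_add: "a \<in> Lo m \<Longrightarrow> b \<in> Lo m \<Longrightarrow> a \<oplus> b \<in> Lo m"
  unfolding Lo_def by (auto simp: coef_add)

lemma Lo_neg: "a \<in> Lo m \<Longrightarrow> \<ominus> a \<in> Lo m"
  unfolding Lo_def by (auto simp: coef_neg)

lemma Lo_minus: "a \<in> Lo m \<Longrightarrow> b \<in> Lo m \<Longrightarrow> a \<ominus> b \<in> Lo m"
  unfolding a_minus_def by (intro Lo_add Lo_neg)

lemma Lo_smul: "r \<in> R \<Longrightarrow> a \<in> Lo m \<Longrightarrow> r \<otimes> a \<in> Lo m"
  unfolding Lo_def by (auto simp: coef_smul RC)

lemma Lo_mono: "a \<in> Lo m \<Longrightarrow> m \<le> m' \<Longrightarrow> a \<in> Lo m'"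
  unfolding Lo_def by auto

lemma Lo_mon: "\<beta> \<in> exps n \<Longrightarrow> dg \<beta> < m \<Longrightarrow> M \<beta> \<in> Lo m"
  unfolding Lo_def by (auto simp: coef_mon)

lemma Lo_smon: "r \<in> R \<Longrightarrow> \<beta> \<in> exps n \<Longrightarrow> dg \<beta> < m \<Longrightarrow> r \<otimes> M \<beta> \<in> Lo m"
  by (intro Lo_smul Lo_mon)

lemma Lo_R: "r \<in> R \<Longrightarrow> r \<in> Lo (Suc m)"
  using Lo_smon[of r "\<lambda>_. 0" "Suc m"] by (simp add: mon_zero RC)

lemma Lo_sum: "finite S \<Longrightarrow> \<forall>\<alpha>\<in>S. f \<alpha> \<in> Lo m \<Longrightarrow> finsum A f S \<in> Lo m"
proof (induct S rule: finite_induct)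
  case empty then show ?case by simp
next
  case (insert a S)
  then show ?case by (subst finsum_insert) (auto intro!: Lo_add simp: Pi_def Lo_carr)
qed

lemma Lo0: "a \<in> Lo 0 \<Longrightarrow> a = \<zero>"
  by (rule coef_eqI) (auto simp: Lo_def coef_zero)

lemma Lo_rep:
  assumes "a \<in> Lo m"
  shows "a = lc (coef a) {\<alpha>. coef a \<alpha> \<noteq> \<zero>}" "finite {\<alpha>. coef a \<alpha> \<noteq> \<zero>}"
    "\<forall>\<alpha>\<in>{\<alpha>. coef a \<alpha> \<noteq> \<zero>}. \<alpha> \<in> exps n \<and> dg \<alpha> < m \<and> coef a \<alpha> \<in> R"
  using assms coef_rep(2) coef_fin coef_supp coef_R unfolding Lo_def
  by (auto simp: not_le[symmetric])

lemma top:
  assumes "\<alpha> \<in> exps n" "r \<in> R" "g \<in> Lo (dg \<alpha>)"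
  shows "coef (r \<otimes> M \<alpha> \<oplus> g) \<alpha> = r"
  using assms by (simp add: coef_add coef_smul coef_mon Lo_carr RC) (simp add: Lo_def RC)

lemma top_eq:
  assumes "\<alpha> \<in> exps n" "r \<in> R" "g \<in> Lo (dg \<alpha>)" "s \<in> R" "h \<in> Lo (dg \<alpha>)"
    and "r \<otimes> M \<alpha> \<oplus> g = s \<otimes> M \<alpha> \<oplus> h"
  shows "r = s"
  using top[OF assms(1,2,3)] top[OF assms(1,4,5)] assms(6) by simp

definition e :: "nat \<Rightarrow> nat \<Rightarrow> nat" where "e i = (\<lambda>_. 0)(i := 1)"

lemma e_exps: "i \<in> {1..n} \<Longrightarrow> e i \<in> exps n" unfolding e_def by (rule exps_upd) auto

lemma dg_e: "i \<in> {1..n} \<Longrightarrow> dg (e i) = 1"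
  using dg_upd[of i "\<lambda>_. 0"] unfolding e_def by simp

lemma x_mon: "i \<in> {1..n} \<Longrightarrow> x i = M (e i)"
  using mon_step[of i "\<lambda>_. 0"] unfolding e_def by (simp add: mon_zero xC)

lemma top_x:
  assumes "i \<in> {1..n}" "r \<in> R" "g \<in> R" "s \<in> R" "h \<in> R"
    and "r \<otimes> x i \<oplus> g = s \<otimes> x i \<oplus> h"
  shows "r = s"
  using assms top_eq[of "e i" r g s h] by (simp add: x_mon e_exps dg_e Lo_R)

lemma sig_R: "i \<in> {1..n} \<Longrightarrow> r \<in> R \<Longrightarrow> \<sigma> i r \<in> R" using am' by blast
lemma del_R: "i \<in> {1..n} \<Longrightarrow> r \<in> R \<Longrightarrow> \<delta> i r \<in> R" using am' by blast
lemma comm: "i \<in> {1..n} \<Longrightarrow> r \<in> R \<Longrightarrow> x i \<otimes> r = \<sigma> i r \<otimes> x i \<oplus> \<delta> i r" using am' by blast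

lemma sig0: assumes "i \<in> {1..n}" shows "\<sigma> i \<zero> = \<zero>"
proof -
  have "\<sigma> i \<zero> \<otimes> x i \<oplus> \<delta> i \<zero> = \<zero> \<otimes> x i \<oplus> \<zero>"
    using comm[OF assms R0] assms by (simp add: xC del_R RC sig_R)
  note eq = this
  show ?thesis by (rule top_x[OF assms _ _ _ _ eq]) (use assms in \<open>auto intro: sig_R del_R\<close>)
qed

lemma sig1: assumes "i \<in> {1..n}" shows "\<sigma> i \<one> = \<one>"
proof -
  have "\<sigma> i \<one> \<otimes> x i \<oplus> \<delta> i \<one> = \<one> \<otimes> x i \<oplus> \<zero>"
    using comm[OF assms R1] assms by (simp add: xC del_R RC sig_R)
  note eq = this
  show ?thesis by (rule top_x[OF assms _ _ _ _ eq]) (use assms in \<open>auto intro: sig_R del_R\<close>)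
qed

lemma sigm: assumes "i \<in> {1..n}" "r \<in> R" "s \<in> R" shows "\<sigma> i (r \<otimes> s) = \<sigma> i r \<otimes> \<sigma> i s"
proof -
  have C: "\<And>a. a \<in> R \<Longrightarrow> a \<in> carrier A" using RC by blast
  have "\<sigma> i (r \<otimes> s) \<otimes> x i \<oplus> \<delta> i (r \<otimes> s) = x i \<otimes> (r \<otimes> s)"
    using comm[OF assms(1) Rm[OF assms(2,3)]] by simp
  also have "\<dots> = (x i \<otimes> r) \<otimes> s" using assms by (simp add: m_assoc xC C)
  also have "\<dots> = (\<sigma> i r \<otimes> \<sigma> i s) \<otimes> x i \<oplus> (\<sigma> i r \<otimes> \<delta> i s \<oplus> \<delta> i r \<otimes> s)"
    using assms by (simp add: comm l_distr r_distr m_assoc a_assoc xC C sig_R del_R)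
  finally have eq: "\<sigma> i (r \<otimes> s) \<otimes> x i \<oplus> \<delta> i (r \<otimes> s) = (\<sigma> i r \<otimes> \<sigma> i s) \<otimes> x i \<oplus> (\<sigma> i r \<otimes> \<delta> i s \<oplus> \<delta> i r \<otimes> s)" .
  show ?thesis
    by (rule top_x[OF assms(1) _ _ _ _ eq]) (use assms in \<open>auto intro!: Rm Ra sig_R del_R\<close>)
qed

lemma unit_mult: "unitR u \<Longrightarrow> unitR v \<Longrightarrow> unitR (u \<otimes> v)"
  unfolding unitR_def
proof (elim conjE bexE, intro conjI)
  fix u' v' assume h: "u \<in> R" "v \<in> R" "u' \<in> R" "v' \<in> R" "u \<otimes> u' = \<one>" "u' \<otimes> u = \<one>" "v \<otimes> v' = \<one>" "v' \<otimes> v = \<one>"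
  have C: "\<And>a. a \<in> R \<Longrightarrow> a \<in> carrier A" using RC by blast
  show "u \<otimes> v \<in> R" using h Rm by blast
  show "\<exists>w\<in>R. u \<otimes> v \<otimes> w = \<one> \<and> w \<otimes> (u \<otimes> v) = \<one>"
    apply (rule bexI[of _ "v' \<otimes> u'"])
    using h by (auto simp: m_assoc C Rm) (metis C h m_assoc r_one Rm)+
qed

lemma unit_one: "unitR \<one>" unfolding unitR_def by (auto intro!: bexI[of _ "\<one>"])

lemma unit_R: "unitR u \<Longrightarrow> u \<in> R" unfolding unitR_def by auto

lemma unit_cancel: assumes "unitR u" "s \<in> R" "u \<otimes> s = \<zero>" shows "s = \<zero>"
proof -
  obtain v where v: "v \<in> R" "v \<otimes> u = \<one>" "u \<in> R" using assms unfolding unitR_def by auto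
  have "s = (v \<otimes> u) \<otimes> s" using v(2) assms(2) by (simp add: RC)
  also have "\<dots> = v \<otimes> (u \<otimes> s)" by (rule m_assoc) (use v assms(2) in \<open>auto simp: RC\<close>)
  also have "\<dots> = \<zero>" using assms(3) v by (simp add: RC)
  finally show ?thesis .
qed

lemma sig_unit: assumes "i \<in> {1..n}" "unitR u" shows "unitR (\<sigma> i u)"
proof -
  obtain v where v: "u \<in> R" "v \<in> R" "u \<otimes> v = \<one>" "v \<otimes> u = \<one>" using assms unfolding unitR_def by auto
  show ?thesis unfolding unitR_def
    using v sigm[OF assms(1), of u v] sigm[OF assms(1), of v u] sig1[OF assms(1)] sig_R[OF assms(1)]
    by auto
qed

end

context spbw begin

lemma LS_mult:
  assumes p: "p \<in> lin_span A R x n" and b: "b \<in> Lo m" and xb: "\<forall>l\<in>{1..n}. x l \<otimes> b \<in> Lo m"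
  shows "p \<otimes> b \<in> Lo m"
proof -
  obtain r0 r where r: "r0 \<in> R" "\<forall>k\<in>{1..n}. r k \<in> R" "p = r0 \<oplus> (\<Oplus>k\<in>{1..n}. r k \<otimes> x k)"
    using p unfolding lin_span_def by blast
  have bc: "b \<in> carrier A" using b Lo_carr by blast
  have "p \<otimes> b = r0 \<otimes> b \<oplus> (\<Oplus>k\<in>{1..n}. r k \<otimes> (x k \<otimes> b))"
    using r bc by (auto simp: l_distr finsum_ldistr Pi_def RC xC m_assoc finsum_closed intro!: finsum_cong')
  also have "\<dots> \<in> Lo m"
  proof (rule Lo_add)
    show "r0 \<otimes> b \<in> Lo m" using r b by (intro Lo_smul) auto
    show "(\<Oplus>k\<in>{1..n}. r k \<otimes> (x k \<otimes> b)) \<in> Lo m"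
      by (rule Lo_sum) (use r xb in \<open>auto intro: Lo_smul[of "r _"]\<close>)
  qed
  finally show ?thesis .
qed

lemma LS_carr: "p \<in> lin_span A R x n \<Longrightarrow> p \<in> carrier A"
  unfolding lin_span_def by (auto simp: RC xC Pi_def intro!: finsum_closed)

lemma rel':
  assumes "k \<in> {1..n}" "i \<in> {1..n}" "k < i"
  shows "\<exists>c p. unitR c \<and> p \<in> lin_span A R x n \<and> x i \<otimes> x k = c \<otimes> x k \<otimes> x i \<oplus> p"
proof -
  obtain c where c: "c \<in> R - {\<zero>}" "x i \<otimes> x k \<ominus> c \<otimes> x k \<otimes> x i \<in> lin_span A R x n"
    using rel assms by blast
  have u: "unitR c" using cunit assms c unfolding unitR_def by blast
  have "x i \<otimes> x k = c \<otimes> x k \<otimes> x i \<oplus> (x i \<otimes> x k \<ominus> c \<otimes> x k \<otimes> x i)"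
    using assms c by (simp add: xC RC a_minus_def add.m_lcomm r_neg)
  then show ?thesis using u c by blast
qed

lemma xLo:
  assumes k: "k \<in> {1..n}"
    and H: "\<forall>\<beta>\<in>exps n. dg \<beta> < m \<longrightarrow> x k \<otimes> M \<beta> \<in> Lo (Suc (Suc (dg \<beta>)))"
    and a: "a \<in> Lo m"
  shows "x k \<otimes> a \<in> Lo (Suc m)"
proof -
  let ?S = "{\<alpha>. coef a \<alpha> \<noteq> \<zero>}"
  note rep = Lo_rep[OF a]
  have "x k \<otimes> a = (\<Oplus>\<alpha>\<in>?S. x k \<otimes> (coef a \<alpha> \<otimes> M \<alpha>))"
    apply (subst rep(1)) unfolding lc_def
    using rep(2,3) k by (subst finsum_rdistr) (auto simp: RC xC)
  also have "\<dots> = (\<Oplus>\<alpha>\<in>?S. \<sigma> k (coef a \<alpha>) \<otimes> (x k \<otimes> M \<alpha>) \<oplus> \<delta> k (coef a \<alpha>) \<otimes> M \<alpha>)"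
    apply (rule finsum_cong')
    using rep(3) k apply (auto simp: RC xC sig_R del_R)
    apply (subst m_assoc[symmetric], auto simp: RC xC)
    apply (subst comm, auto simp: l_distr RC xC sig_R del_R m_assoc)
    done
  also have "\<dots> \<in> Lo (Suc m)"
  proof (rule Lo_sum[OF rep(2)], rule ballI)
    fix \<alpha> assume "\<alpha> \<in> ?S"
    then have h: "\<alpha> \<in> exps n" "dg \<alpha> < m" "coef a \<alpha> \<in> R" using rep(3) by auto
    have 1: "x k \<otimes> M \<alpha> \<in> Lo (Suc m)" using H h by (auto elim!: Lo_mono)
    have 2: "\<delta> k (coef a \<alpha>) \<otimes> M \<alpha> \<in> Lo (Suc m)"
      by (rule Lo_smon) (use h k in \<open>auto intro: del_R\<close>)
    have 3: "\<sigma> k (coef a \<alpha>) \<otimes> (x k \<otimes> M \<alpha>) \<in> Lo (Suc m)"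
      by (rule Lo_smul[OF _ 1]) (use h k in \<open>auto intro: sig_R\<close>)
    show "\<sigma> k (coef a \<alpha>) \<otimes> (x k \<otimes> M \<alpha>) \<oplus> \<delta> k (coef a \<alpha>) \<otimes> M \<alpha> \<in> Lo (Suc m)"
      by (rule Lo_add[OF 3 2])
  qed
  finally show ?thesis .
qed


lemma K1: "\<forall>\<beta>\<in>exps n. dg \<beta> = m \<longrightarrow> (\<forall>i\<in>{1..n}. \<exists>u g. unitR u \<and> g \<in> Lo (Suc m) \<and>
             x i \<otimes> M \<beta> = u \<otimes> M (\<beta>(i := Suc (\<beta> i))) \<oplus> g)"
proof (induct m rule: less_induct)
  case (less m)
  have K1lo: "x l \<otimes> M \<gamma> \<in> Lo (Suc (Suc (dg \<gamma>)))"
    if a: "\<gamma> \<in> exps n" "dg \<gamma> < m" "l \<in> {1..n}" for \<gamma> l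
  proof -
    obtain u g where ug: "unitR u" "g \<in> Lo (Suc (dg \<gamma>))" "x l \<otimes> M \<gamma> = u \<otimes> M (\<gamma>(l := Suc (\<gamma> l))) \<oplus> g"
      using less[rule_format, OF a(2) a(1) refl a(3)] by blast
    have um: "u \<otimes> M (\<gamma>(l := Suc (\<gamma> l))) \<in> Lo (Suc (Suc (dg \<gamma>)))"
      using a ug by (intro Lo_smon) (auto simp: unit_R exps_upd dg_upd)
    show ?thesis using ug(3) Lo_add[OF um Lo_mono[OF ug(2)]] by simp
  qed
  show ?case
  proof (intro ballI impI)
    fix \<beta> i assume \<beta>: "\<beta> \<in> exps n" "dg \<beta> = m" and i: "i \<in> {1..n}"
    show "\<exists>u g. unitR u \<and> g \<in> Lo (Suc m) \<and> x i \<otimes> M \<beta> = u \<otimes> M (\<beta>(i := Suc (\<beta> i))) \<oplus> g"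
    proof (cases "\<forall>l<i. \<beta> l = 0")
      case True
      show ?thesis
      proof (intro exI conjI)
        show "unitR \<one>" by (rule unit_one)
        show "\<zero> \<in> Lo (Suc m)" by simp
        show "x i \<otimes> M \<beta> = \<one> \<otimes> M (\<beta>(i := Suc (\<beta> i))) \<oplus> \<zero>"
          using mon_step[OF i True] by simp
      qed
    next
      case False
      define k where "k = (LEAST l. \<beta> l \<noteq> 0)"
      obtain l where l: "l < i" "\<beta> l \<noteq> 0" using False by auto
      have bk: "\<beta> k \<noteq> 0" unfolding k_def by (rule LeastI[of "\<lambda>l. \<beta> l \<noteq> 0", OF l(2)])
      have kl: "\<forall>l<k. \<beta> l = 0"
      proof (intro allI impI)
        fix l assume "l < k"
        then show "\<beta> l = 0" using not_less_Least[of l "\<lambda>l. \<beta> l \<noteq> 0"] unfolding k_def by blast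
      qed
      have "k \<le> l" unfolding k_def by (rule Least_le) (rule l(2))
      then have ki: "k < i" using l(1) by simp
      have k1: "k \<in> {1..n}"
      proof (rule ccontr)
        assume "k \<notin> {1..n}"
        then have "\<beta> k = 0" using \<beta>(1) unfolding exps_def by blast
        with bk show False by simp
      qed
      have kni: "k \<noteq> i" using ki by simp
      define \<gamma> where "\<gamma> = \<beta>(k := \<beta> k - 1)"
      have \<gamma>: "\<gamma> \<in> exps n" unfolding \<gamma>_def by (rule exps_upd[OF \<beta>(1) k1])
      have b\<gamma>: "\<beta> = \<gamma>(k := Suc (\<gamma> k))" using bk by (auto simp: \<gamma>_def fun_eq_iff)
      have \<gamma>l: "\<forall>l<k. \<gamma> l = 0" using kl by (auto simp: \<gamma>_def)
      have d\<gamma>: "m = Suc (dg \<gamma>)" using dg_upd[OF k1, of \<gamma>] b\<gamma> \<beta>(2) by simp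
      have M\<beta>: "M \<beta> = x k \<otimes> M \<gamma>" using mon_step[OF k1 \<gamma>l] b\<gamma> by simp
      obtain u g where ug: "unitR u" "g \<in> Lo m" "x i \<otimes> M \<gamma> = u \<otimes> M (\<gamma>(i := Suc (\<gamma> i))) \<oplus> g"
        using less[rule_format, OF _ \<gamma> refl i] d\<gamma> by auto
      obtain c p where cp: "unitR c" "p \<in> lin_span A R x n" "x i \<otimes> x k = c \<otimes> x k \<otimes> x i \<oplus> p"
        using rel'[OF k1 i ki] by blast
      define \<gamma>' where "\<gamma>' = \<gamma>(i := Suc (\<gamma> i))"
      have \<gamma>': "\<gamma>' \<in> exps n" "dg \<gamma>' = m" unfolding \<gamma>'_def using exps_upd[OF \<gamma> i] dg_upd[OF i] d\<gamma> by auto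
      have \<gamma>'l: "\<forall>l<k. \<gamma>' l = 0" using \<gamma>l ki by (auto simp: \<gamma>'_def)
      have M\<beta>': "x k \<otimes> M \<gamma>' = M (\<beta>(i := Suc (\<beta> i)))"
      proof -
        have "\<gamma>'(k := Suc (\<gamma>' k)) = \<beta>(i := Suc (\<beta> i))"
          using kni bk by (auto simp: \<gamma>'_def \<gamma>_def fun_eq_iff)
        then show ?thesis using mon_step[OF k1 \<gamma>'l] by simp
      qed
      have uR: "u \<in> R" "c \<in> R" using ug cp unit_R by auto
      have C: "\<And>a. a \<in> R \<Longrightarrow> a \<in> carrier A" using RC by blast
      have xi: "x i \<in> carrier A" "x k \<in> carrier A" using i k1 xC by auto
      have sR: "\<sigma> k u \<in> R" "\<delta> k u \<in> R" using uR k1 sig_R del_R by auto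
      have gc: "g \<in> carrier A" "p \<in> carrier A" using ug cp Lo_carr LS_carr by auto
      have "x i \<otimes> M \<beta> = (x i \<otimes> x k) \<otimes> M \<gamma>" unfolding M\<beta> by (rule m_assoc[symmetric]) (use xi in auto)
      also have "\<dots> = c \<otimes> (x k \<otimes> (x i \<otimes> M \<gamma>)) \<oplus> p \<otimes> M \<gamma>"
        unfolding cp(3) using xi uR gc by (simp add: l_distr m_assoc C)
      also have "\<dots> = c \<otimes> ((x k \<otimes> u) \<otimes> M \<gamma>') \<oplus> c \<otimes> (x k \<otimes> g) \<oplus> p \<otimes> M \<gamma>"
      proof -
        have ug3: "x i \<otimes> M \<gamma> = u \<otimes> M \<gamma>' \<oplus> g" using ug(3) \<gamma>'_def by simp
        show ?thesis unfolding ug3 using xi uR gc by (simp add: r_distr m_assoc C)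
      qed
      also have "\<dots> = (c \<otimes> \<sigma> k u) \<otimes> (x k \<otimes> M \<gamma>') \<oplus> ((c \<otimes> \<delta> k u) \<otimes> M \<gamma>' \<oplus> c \<otimes> (x k \<otimes> g) \<oplus> p \<otimes> M \<gamma>)"
        unfolding comm[OF k1 uR(1)] using xi uR gc sR by (simp add: l_distr r_distr m_assoc C a_assoc)
      finally have main: "x i \<otimes> M \<beta> = (c \<otimes> \<sigma> k u) \<otimes> M (\<beta>(i := Suc (\<beta> i))) \<oplus>
          ((c \<otimes> \<delta> k u) \<otimes> M \<gamma>' \<oplus> c \<otimes> (x k \<otimes> g) \<oplus> p \<otimes> M \<gamma>)"
        by (simp only: M\<beta>')
      have G1: "(c \<otimes> \<delta> k u) \<otimes> M \<gamma>' \<in> Lo (Suc m)"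
        by (rule Lo_smon) (use \<gamma>' uR sR in \<open>auto intro: Rm\<close>)
      have G2: "c \<otimes> (x k \<otimes> g) \<in> Lo (Suc m)"
        by (rule Lo_smul[OF uR(2) xLo[OF k1 _ ug(2)]]) (use K1lo[OF _ _ k1] in auto)
      have G3: "p \<otimes> M \<gamma> \<in> Lo (Suc m)"
        by (rule LS_mult[OF cp(2) Lo_mon[OF \<gamma>]]) (use d\<gamma> K1lo[OF \<gamma>] in auto)
      have U: "unitR (c \<otimes> \<sigma> k u)" using cp(1) sig_unit[OF k1 ug(1)] by (rule unit_mult)
      show ?thesis
      proof (intro exI conjI)
        show "unitR (c \<otimes> \<sigma> k u)" by (rule U)
        show "(c \<otimes> \<delta> k u) \<otimes> M \<gamma>' \<oplus> c \<otimes> (x k \<otimes> g) \<oplus> p \<otimes> M \<gamma> \<in> Lo (Suc m)"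
          by (intro Lo_add G1 G2 G3)
      qed (rule main)
    qed
  qed
qed

end

context spbw begin

lemma K1': "\<beta> \<in> exps n \<Longrightarrow> i \<in> {1..n} \<Longrightarrow> \<exists>u g. unitR u \<and> g \<in> Lo (Suc (dg \<beta>)) \<and>
             x i \<otimes> M \<beta> = u \<otimes> M (\<beta>(i := Suc (\<beta> i))) \<oplus> g"
  using K1 by blast

lemma K1lo: assumes "\<beta> \<in> exps n" "i \<in> {1..n}" shows "x i \<otimes> M \<beta> \<in> Lo (Suc (Suc (dg \<beta>)))"
proof -
  obtain u g where ug: "unitR u" "g \<in> Lo (Suc (dg \<beta>))" "x i \<otimes> M \<beta> = u \<otimes> M (\<beta>(i := Suc (\<beta> i))) \<oplus> g"
    using K1'[OF assms] by blast
  have um: "u \<otimes> M (\<beta>(i := Suc (\<beta> i))) \<in> Lo (Suc (Suc (dg \<beta>)))"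
    by (rule Lo_smon) (use assms ug in \<open>auto simp: unit_R exps_upd dg_upd\<close>)
  show ?thesis using ug(3) Lo_add[OF um Lo_mono[OF ug(2)]] by simp
qed

lemma xLo': "k \<in> {1..n} \<Longrightarrow> a \<in> Lo m \<Longrightarrow> x k \<otimes> a \<in> Lo (Suc m)"
  by (rule xLo) (auto intro: K1lo)

lemma decomp:
  assumes \<beta>: "\<beta> \<in> exps n" and nz: "\<exists>l. \<beta> l \<noteq> 0"
  shows "\<exists>k \<gamma>. k \<in> {1..n} \<and> \<gamma> \<in> exps n \<and> dg \<beta> = Suc (dg \<gamma>) \<and> M \<beta> = x k \<otimes> M \<gamma>"
proof -
  define k where "k = (LEAST l. \<beta> l \<noteq> 0)"
  obtain l where l: "\<beta> l \<noteq> 0" using nz by auto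
  have bk: "\<beta> k \<noteq> 0" unfolding k_def by (rule LeastI[of "\<lambda>l. \<beta> l \<noteq> 0", OF l])
  have kl: "\<forall>l<k. \<beta> l = 0"
  proof (intro allI impI)
    fix l assume "l < k"
    then show "\<beta> l = 0" using not_less_Least[of l "\<lambda>l. \<beta> l \<noteq> 0"] unfolding k_def by blast
  qed
  have k1: "k \<in> {1..n}"
  proof (rule ccontr)
    assume "k \<notin> {1..n}"
    then have "\<beta> k = 0" using \<beta> unfolding exps_def by blast
    with bk show False by simp
  qed
  define \<gamma> where "\<gamma> = \<beta>(k := \<beta> k - 1)"
  have \<gamma>: "\<gamma> \<in> exps n" unfolding \<gamma>_def by (rule exps_upd[OF \<beta> k1])
  have b\<gamma>: "\<beta> = \<gamma>(k := Suc (\<gamma> k))" using bk by (auto simp: \<gamma>_def fun_eq_iff)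
  have \<gamma>l: "\<forall>l<k. \<gamma> l = 0" using kl by (auto simp: \<gamma>_def)
  have d\<gamma>: "dg \<beta> = Suc (dg \<gamma>)" using dg_upd[OF k1, of \<gamma>] b\<gamma> by simp
  have M\<beta>: "M \<beta> = x k \<otimes> M \<gamma>" using mon_step[OF k1 \<gamma>l] b\<gamma> by simp
  show ?thesis using k1 \<gamma> d\<gamma> M\<beta> by blast
qed

lemma dg0: assumes "\<beta> \<in> exps n" "dg \<beta> = 0" shows "\<beta> = (\<lambda>_. 0)"
proof
  fix l show "\<beta> l = 0"
  proof (cases "l \<in> {1..n}")
    case True then show ?thesis using assms(2) unfolding dg_def by simp
  next
    case False then show ?thesis using assms(1) unfolding exps_def by blast
  qed
qed

lemma K2: "\<forall>\<beta>\<in>exps n. dg \<beta> = m \<longrightarrow> (\<exists>\<tau>. bij_betw \<tau> R R \<and> \<tau> \<zero> = \<zero> \<and>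
              (\<forall>r\<in>R. \<exists>g\<in>Lo m. M \<beta> \<otimes> r = \<tau> r \<otimes> M \<beta> \<oplus> g))"
proof (induct m)
  case 0
  show ?case
  proof (intro ballI impI)
    fix \<beta> assume "\<beta> \<in> exps n" "dg \<beta> = 0"
    then have b: "\<beta> = (\<lambda>_. 0)" by (rule dg0)
    show "\<exists>\<tau>. bij_betw \<tau> R R \<and> \<tau> \<zero> = \<zero> \<and> (\<forall>r\<in>R. \<exists>g\<in>Lo 0. M \<beta> \<otimes> r = \<tau> r \<otimes> M \<beta> \<oplus> g)"
      by (rule exI[of _ id]) (auto simp: b mon_zero RC intro!: bexI[of _ \<zero>])
  qed
next
  case (Suc m)
  show ?case
  proof (intro ballI impI)
    fix \<beta> assume \<beta>: "\<beta> \<in> exps n" "dg \<beta> = Suc m"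
    have "\<exists>l. \<beta> l \<noteq> 0"
    proof (rule ccontr)
      assume "\<not> (\<exists>l. \<beta> l \<noteq> 0)"
      then have "\<beta> = (\<lambda>_. 0)" by auto
      then show False using \<beta>(2) by simp
    qed
    then obtain k \<gamma> where kg: "k \<in> {1..n}" "\<gamma> \<in> exps n" "dg \<beta> = Suc (dg \<gamma>)" "M \<beta> = x k \<otimes> M \<gamma>"
      using decomp[OF \<beta>(1)] by blast
    have dgg: "dg \<gamma> = m" using kg \<beta> by simp
    obtain \<tau> where \<tau>: "bij_betw \<tau> R R" "\<tau> \<zero> = \<zero>" "\<forall>r\<in>R. \<exists>g\<in>Lo m. M \<gamma> \<otimes> r = \<tau> r \<otimes> M \<gamma> \<oplus> g"
      using Suc[rule_format, OF kg(2) dgg] by blast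
    have \<tau>R: "r \<in> R \<Longrightarrow> \<tau> r \<in> R" for r using \<tau>(1) bij_betwE by blast
    have C: "\<And>a. a \<in> R \<Longrightarrow> a \<in> carrier A" using RC by blast
    have xk: "x k \<in> carrier A" using kg xC by auto
    show "\<exists>\<tau>. bij_betw \<tau> R R \<and> \<tau> \<zero> = \<zero> \<and> (\<forall>r\<in>R. \<exists>g\<in>Lo (Suc m). M \<beta> \<otimes> r = \<tau> r \<otimes> M \<beta> \<oplus> g)"
    proof (intro exI[of _ "\<lambda>r. \<sigma> k (\<tau> r)"] conjI ballI)
      show "bij_betw (\<lambda>r. \<sigma> k (\<tau> r)) R R"
        using bij_betw_trans[OF \<tau>(1), of "\<sigma> k" R] sbij kg(1) by (simp add: o_def)
      show "\<sigma> k (\<tau> \<zero>) = \<zero>" using \<tau>(2) sig0[OF kg(1)] by simp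
      fix r assume r: "r \<in> R"
      obtain g where g: "g \<in> Lo m" "M \<gamma> \<otimes> r = \<tau> r \<otimes> M \<gamma> \<oplus> g" using \<tau>(3) r by blast
      have gc: "g \<in> carrier A" using g Lo_carr by blast
      have tR: "\<tau> r \<in> R" "\<sigma> k (\<tau> r) \<in> R" "\<delta> k (\<tau> r) \<in> R" using \<tau>R r kg(1) sig_R del_R by auto
      have "M \<beta> \<otimes> r = x k \<otimes> (M \<gamma> \<otimes> r)" using kg(4) xk r by (simp add: m_assoc C)
      also have "\<dots> = (x k \<otimes> \<tau> r) \<otimes> M \<gamma> \<oplus> x k \<otimes> g"
        unfolding g(2) using xk gc tR by (simp add: r_distr m_assoc C)
      also have "\<dots> = \<sigma> k (\<tau> r) \<otimes> M \<beta> \<oplus> (\<delta> k (\<tau> r) \<otimes> M \<gamma> \<oplus> x k \<otimes> g)"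
        unfolding comm[OF kg(1) tR(1)] kg(4) using xk gc tR by (simp add: l_distr m_assoc C a_assoc)
      finally have eq: "M \<beta> \<otimes> r = \<sigma> k (\<tau> r) \<otimes> M \<beta> \<oplus> (\<delta> k (\<tau> r) \<otimes> M \<gamma> \<oplus> x k \<otimes> g)" .
      have G: "\<delta> k (\<tau> r) \<otimes> M \<gamma> \<oplus> x k \<otimes> g \<in> Lo (Suc m)"
        using Lo_smon[OF tR(3) kg(2), of "Suc m"] xLo'[OF kg(1) g(1)] dgg by (intro Lo_add) auto
      show "\<exists>g\<in>Lo (Suc m). M \<beta> \<otimes> r = \<sigma> k (\<tau> r) \<otimes> M \<beta> \<oplus> g" using eq G by blast
    qed
  qed
qed

lemma K2': "\<beta> \<in> exps n \<Longrightarrow> \<exists>\<tau>. bij_betw \<tau> R R \<and> \<tau> \<zero> = \<zero> \<and>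
              (\<forall>r\<in>R. \<exists>g\<in>Lo (dg \<beta>). M \<beta> \<otimes> r = \<tau> r \<otimes> M \<beta> \<oplus> g)"
  using K2 by blast

lemma Lo_rmul:
  assumes a: "a \<in> Lo m" and r: "r \<in> R"
  shows "a \<otimes> r \<in> Lo m"
proof -
  let ?S = "{\<alpha>. coef a \<alpha> \<noteq> \<zero>}"
  note rep = Lo_rep[OF a]
  have C: "\<And>a. a \<in> R \<Longrightarrow> a \<in> carrier A" using RC by blast
  have "a \<otimes> r = (\<Oplus>\<alpha>\<in>?S. coef a \<alpha> \<otimes> (M \<alpha> \<otimes> r))"
    apply (subst rep(1)) unfolding lc_def
    using rep(2,3) r by (subst finsum_ldistr) (auto simp: C m_assoc intro!: finsum_cong')
  also have "\<dots> \<in> Lo m"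
  proof (rule Lo_sum[OF rep(2)], rule ballI)
    fix \<alpha> assume "\<alpha> \<in> ?S"
    then have h: "\<alpha> \<in> exps n" "dg \<alpha> < m" "coef a \<alpha> \<in> R" using rep(3) by auto
    obtain \<tau> where \<tau>: "bij_betw \<tau> R R" "\<forall>r\<in>R. \<exists>g\<in>Lo (dg \<alpha>). M \<alpha> \<otimes> r = \<tau> r \<otimes> M \<alpha> \<oplus> g"
      using K2'[OF h(1)] by blast
    obtain g where g: "g \<in> Lo (dg \<alpha>)" "M \<alpha> \<otimes> r = \<tau> r \<otimes> M \<alpha> \<oplus> g" using \<tau>(2) r by blast
    have tr: "\<tau> r \<in> R" using \<tau>(1) r bij_betwE by blast
    have "M \<alpha> \<otimes> r \<in> Lo m" unfolding g(2)
      by (rule Lo_add[OF Lo_smon[OF tr h(1) h(2)] Lo_mono[OF g(1)]]) (use h in simp)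
    then show "coef a \<alpha> \<otimes> (M \<alpha> \<otimes> r) \<in> Lo m" by (rule Lo_smul[OF h(3)])
  qed
  finally show ?thesis .
qed

end


primrec cnt :: "nat list \<Rightarrow> nat \<Rightarrow> nat" where
  "cnt [] = (\<lambda>_. 0)"
| "cnt (i # ws) = (cnt ws)(i := Suc (cnt ws i))"

lemma cnt_append: "cnt (us @ vs) l = cnt us l + cnt vs l"
  by (induct us) auto

lemma cnt_rep: "cnt (replicate k i) l = (if l = i then k else 0)"
  by (induct k) auto

lemma cnt_word: "distinct L \<Longrightarrow> cnt (concat (map (\<lambda>i. replicate (\<alpha> i) i) L)) l = (if l \<in> set L then \<alpha> l else 0)"
  by (induct L) (auto simp: cnt_append cnt_rep)

context spbw begin

definition W :: "nat list \<Rightarrow> 'a" where "W ws = foldr (\<lambda>i acc. x i \<otimes> acc) ws \<one>"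

lemma W_carr: "set ws \<subseteq> {1..n} \<Longrightarrow> W ws \<in> carrier A"
  unfolding W_def by (induct ws) (auto simp: xC)

lemma W_Cons: "W (i # ws) = x i \<otimes> W ws" unfolding W_def by simp

lemma W_append: "set us \<subseteq> {1..n} \<Longrightarrow> set vs \<subseteq> {1..n} \<Longrightarrow> W (us @ vs) = W us \<otimes> W vs"
proof (induct us)
  case Nil then show ?case by (simp add: W_def W_carr[unfolded W_def])
next
  case (Cons i us)
  then show ?case by (simp add: W_Cons m_assoc W_carr xC)
qed

lemma W_rep: "i \<in> {1..n} \<Longrightarrow> W (replicate k i) = x i [^] k"
proof (induct k)
  case 0 then show ?case by (simp add: W_def)
next
  case (Suc k) then show ?case by (simp add: W_Cons nat_pow_Suc2[OF xC, symmetric] del: nat_pow_Suc)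
qed

lemma cnt_exps: "set ws \<subseteq> {1..n} \<Longrightarrow> cnt ws \<in> exps n \<and> dg (cnt ws) = length ws"
  by (induct ws) (auto simp: exps_upd dg_upd)

lemma Wlead: "set ws \<subseteq> {1..n} \<Longrightarrow> \<exists>u g. unitR u \<and> g \<in> Lo (length ws) \<and> W ws = u \<otimes> M (cnt ws) \<oplus> g"
proof (induct ws)
  case Nil
  show ?case
  proof (intro exI conjI)
    show "unitR \<one>" by (rule unit_one)
    show "\<zero> \<in> Lo (length [])" by simp
    show "W [] = \<one> \<otimes> M (cnt []) \<oplus> \<zero>" by (simp add: W_def mon_zero)
  qed
next
  case (Cons i ws)
  have i: "i \<in> {1..n}" and ws: "set ws \<subseteq> {1..n}" using Cons by auto
  obtain u g where ug: "unitR u" "g \<in> Lo (length ws)" "W ws = u \<otimes> M (cnt ws) \<oplus> g" using Cons ws by blast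
  have ce: "cnt ws \<in> exps n" "dg (cnt ws) = length ws" using cnt_exps[OF ws] by auto
  obtain u' g' where ug': "unitR u'" "g' \<in> Lo (Suc (length ws))"
      "x i \<otimes> M (cnt ws) = u' \<otimes> M (cnt (i # ws)) \<oplus> g'"
    using K1'[OF ce(1) i] ce(2) by auto
  have C: "\<And>a. a \<in> R \<Longrightarrow> a \<in> carrier A" using RC by blast
  have uR: "u \<in> R" "u' \<in> R" "\<sigma> i u \<in> R" "\<delta> i u \<in> R" using ug ug' unit_R i sig_R del_R by auto
  have gc: "g \<in> carrier A" "g' \<in> carrier A" using ug ug' Lo_carr by auto
  have xi: "x i \<in> carrier A" using i xC by auto
  have "W (i # ws) = x i \<otimes> (u \<otimes> M (cnt ws) \<oplus> g)" by (simp add: W_Cons ug(3))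
  also have "\<dots> = (x i \<otimes> u) \<otimes> M (cnt ws) \<oplus> x i \<otimes> g" using xi uR gc by (simp add: r_distr m_assoc C)
  also have "\<dots> = (\<sigma> i u \<otimes> u') \<otimes> M (cnt (i # ws)) \<oplus> (\<sigma> i u \<otimes> g' \<oplus> \<delta> i u \<otimes> M (cnt ws) \<oplus> x i \<otimes> g)"
    unfolding comm[OF i uR(1)] using xi uR gc
    by (simp add: l_distr r_distr m_assoc C a_assoc ug'(3))
  finally have eq: "W (i # ws) = (\<sigma> i u \<otimes> u') \<otimes> M (cnt (i # ws)) \<oplus> (\<sigma> i u \<otimes> g' \<oplus> \<delta> i u \<otimes> M (cnt ws) \<oplus> x i \<otimes> g)" .
  have G: "\<sigma> i u \<otimes> g' \<oplus> \<delta> i u \<otimes> M (cnt ws) \<oplus> x i \<otimes> g \<in> Lo (length (i # ws))"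
  proof (intro Lo_add)
    show "\<sigma> i u \<otimes> g' \<in> Lo (length (i # ws))" using Lo_smul[OF uR(3) ug'(2)] by simp
    show "\<delta> i u \<otimes> M (cnt ws) \<in> Lo (length (i # ws))" using Lo_smon[OF uR(4) ce(1)] ce(2) by simp
    show "x i \<otimes> g \<in> Lo (length (i # ws))" using xLo'[OF i ug(2)] by simp
  qed
  have U: "unitR (\<sigma> i u \<otimes> u')" by (rule unit_mult[OF sig_unit[OF i ug(1)] ug'(1)])
  show ?case using eq G U by blast
qed

abbreviation rmon where "rmon \<alpha> \<equiv> mon (opp_ring A) x n \<alpha>"

lemma rmon_fold: "rmon \<alpha> = foldr (\<lambda>i acc. acc \<otimes> x i [^] (\<alpha> i)) [1..<Suc n] \<one>"
  unfolding mon_def by (rule foldr_cong) (auto simp: opp_pow xC)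

lemma rfold: "set L \<subseteq> {1..n} \<Longrightarrow>
  foldr (\<lambda>i acc. acc \<otimes> x i [^] (\<alpha> i)) L \<one> = W (concat (map (\<lambda>i. replicate (\<alpha> i) i) (rev L)))"
proof (induct L)
  case Nil then show ?case by (simp add: W_def)
next
  case (Cons i L)
  then have i: "i \<in> {1..n}" and L: "set L \<subseteq> {1..n}" by auto
  have s1: "set (concat (map (\<lambda>i. replicate (\<alpha> i) i) (rev L))) \<subseteq> {1..n}" using L by auto
  have s2: "set (replicate (\<alpha> i) i) \<subseteq> {1..n}" using i by auto
  show ?case using Cons(1)[OF L] W_append[OF s1 s2] i W_rep[OF i]
    by auto
qed

lemma RL: assumes "\<alpha> \<in> exps n" shows "\<exists>u g. unitR u \<and> g \<in> Lo (dg \<alpha>) \<and> rmon \<alpha> = u \<otimes> M \<alpha> \<oplus> g"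
proof -
  define ws where "ws = concat (map (\<lambda>i. replicate (\<alpha> i) i) (rev [1..<Suc n]))"
  have ws: "set ws \<subseteq> {1..n}" unfolding ws_def by auto
  have r: "rmon \<alpha> = W ws" unfolding rmon_fold ws_def by (rule rfold) auto
  have c: "cnt ws = \<alpha>"
  proof
    fix l show "cnt ws l = \<alpha> l"
      unfolding ws_def using assms by (subst cnt_word) (auto simp: exps_def)
  qed
  show ?thesis using Wlead[OF ws] cnt_exps[OF ws] r c by auto
qed

end

context spbw begin

lemma rmon_carr: "rmon \<alpha> \<in> carrier A"
proof -
  have "rmon \<alpha> = W (concat (map (\<lambda>i. replicate (\<alpha> i) i) (rev [1..<Suc n])))"
    unfolding rmon_fold by (rule rfold) auto
  then show ?thesis by (simp add: W_carr subset_iff)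
qed

lemma RLs: assumes a: "\<alpha> \<in> exps n"
  shows "\<exists>u \<tau>. unitR u \<and> bij_betw \<tau> R R \<and> \<tau> \<zero> = \<zero> \<and>
     (\<forall>s\<in>R. \<exists>g\<in>Lo (dg \<alpha>). rmon \<alpha> \<otimes> s = (u \<otimes> \<tau> s) \<otimes> M \<alpha> \<oplus> g)"
proof -
  obtain u g where ug: "unitR u" "g \<in> Lo (dg \<alpha>)" "rmon \<alpha> = u \<otimes> M \<alpha> \<oplus> g" using RL[OF a] by blast
  obtain \<tau> where \<tau>: "bij_betw \<tau> R R" "\<tau> \<zero> = \<zero>" "\<forall>r\<in>R. \<exists>g\<in>Lo (dg \<alpha>). M \<alpha> \<otimes> r = \<tau> r \<otimes> M \<alpha> \<oplus> g"
    using K2'[OF a] by blast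
  have C: "\<And>a. a \<in> R \<Longrightarrow> a \<in> carrier A" using RC by blast
  have uR: "u \<in> R" using ug unit_R by auto
  show ?thesis
  proof (intro exI conjI ballI)
    show "unitR u" "bij_betw \<tau> R R" "\<tau> \<zero> = \<zero>" using ug \<tau> by auto
    fix s assume s: "s \<in> R"
    obtain g' where g': "g' \<in> Lo (dg \<alpha>)" "M \<alpha> \<otimes> s = \<tau> s \<otimes> M \<alpha> \<oplus> g'" using \<tau>(3) s by blast
    have ts: "\<tau> s \<in> R" using \<tau>(1) s bij_betwE by blast
    have gc: "g \<in> carrier A" "g' \<in> carrier A" using ug g' Lo_carr by auto
    have "rmon \<alpha> \<otimes> s = u \<otimes> (M \<alpha> \<otimes> s) \<oplus> g \<otimes> s"
      unfolding ug(3) using uR s gc by (simp add: l_distr m_assoc C)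
    also have "\<dots> = (u \<otimes> \<tau> s) \<otimes> M \<alpha> \<oplus> (u \<otimes> g' \<oplus> g \<otimes> s)"
      unfolding g'(2) using uR s gc ts by (simp add: r_distr m_assoc C a_assoc)
    finally have eq: "rmon \<alpha> \<otimes> s = (u \<otimes> \<tau> s) \<otimes> M \<alpha> \<oplus> (u \<otimes> g' \<oplus> g \<otimes> s)" .
    have G: "u \<otimes> g' \<oplus> g \<otimes> s \<in> Lo (dg \<alpha>)"
      by (rule Lo_add[OF Lo_smul[OF uR g'(1)] Lo_rmul[OF ug(2) s]])
    show "\<exists>g\<in>Lo (dg \<alpha>). rmon \<alpha> \<otimes> s = (u \<otimes> \<tau> s) \<otimes> M \<alpha> \<oplus> g" using eq G by blast
  qed
qed

definition rs :: "(nat \<Rightarrow> nat) set \<Rightarrow> ((nat \<Rightarrow> nat) \<Rightarrow> 'a) \<Rightarrow> 'a" where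
  "rs S s = (\<Oplus>\<alpha>\<in>S. rmon \<alpha> \<otimes> s \<alpha>)"

lemma rs_carr: "\<forall>\<alpha>\<in>S. s \<alpha> \<in> R \<Longrightarrow> rs S s \<in> carrier A"
  unfolding rs_def by (rule finsum_closed) (auto simp: RC rmon_carr)

lemma rs_shrink:
  assumes "finite T" "S \<subseteq> T" "\<forall>\<alpha>\<in>T. s \<alpha> \<in> R" "\<forall>\<alpha>\<in>T - S. s \<alpha> = \<zero>"
  shows "rs S s = rs T s"
  unfolding rs_def
  by (rule add.finprod_mono_neutral_cong_left) (use assms in \<open>auto simp: RC rmon_carr\<close>)

lemma rs_cong: "\<forall>\<alpha>\<in>S. s \<alpha> = t \<alpha> \<Longrightarrow> \<forall>\<alpha>\<in>S. s \<alpha> \<in> R \<Longrightarrow> rs S s = rs S t"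
  unfolding rs_def by (rule finsum_cong') (auto simp: RC rmon_carr)

lemma rs_ext:
  assumes "finite T" "S \<subseteq> T" "\<forall>\<alpha>\<in>S. s \<alpha> \<in> R"
  shows "rs S s = rs T (ext s S)"
proof -
  have "rs S s = rs S (ext s S)" by (rule rs_cong) (use assms in \<open>auto simp: ext_def\<close>)
  also have "\<dots> = rs T (ext s S)" by (rule rs_shrink) (use assms in \<open>auto simp: ext_def\<close>)
  finally show ?thesis .
qed

lemma rs_add:
  assumes "finite S" "\<forall>\<alpha>\<in>S. s \<alpha> \<in> R" "\<forall>\<alpha>\<in>S. t \<alpha> \<in> R"
  shows "rs S s \<oplus> rs S t = rs S (\<lambda>\<alpha>. s \<alpha> \<oplus> t \<alpha>)"
proof -
  have "rs S (\<lambda>\<alpha>. s \<alpha> \<oplus> t \<alpha>) = (\<Oplus>\<alpha>\<in>S. rmon \<alpha> \<otimes> s \<alpha> \<oplus> rmon \<alpha> \<otimes> t \<alpha>)"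
    unfolding rs_def by (rule finsum_cong') (use assms in \<open>auto simp: r_distr RC rmon_carr\<close>)
  also have "\<dots> = rs S s \<oplus> rs S t"
    unfolding rs_def by (rule finsum_addf) (use assms in \<open>auto simp: RC rmon_carr\<close>)
  finally show ?thesis by simp
qed

lemma rs_neg:
  assumes "finite S" "\<forall>\<alpha>\<in>S. s \<alpha> \<in> R"
  shows "\<ominus> rs S s = rs S (\<lambda>\<alpha>. \<ominus> s \<alpha>)"
proof -
  have "rs S s \<oplus> rs S (\<lambda>\<alpha>. \<ominus> s \<alpha>) = rs S (\<lambda>\<alpha>. s \<alpha> \<oplus> \<ominus> s \<alpha>)"
    by (rule rs_add) (use assms in \<open>auto intro: Rn\<close>)
  also have "\<dots> = rs S (\<lambda>_. \<zero>)" by (rule rs_cong) (use assms in \<open>auto simp: RC r_neg\<close>)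
  also have "\<dots> = \<zero>" unfolding rs_def by (simp add: rmon_carr)
  finally have "rs S s \<oplus> rs S (\<lambda>\<alpha>. \<ominus> s \<alpha>) = \<zero>" .
  then show ?thesis using rs_carr assms Rn
    by (metis add.inv_closed add.inv_comm add.r_inv_ex minus_equality)
qed

lemma rind:
  assumes S: "finite S" "S \<subseteq> exps n" "\<forall>\<alpha>\<in>S. s \<alpha> \<in> R" and z: "rs S s = \<zero>"
  shows "\<forall>\<alpha>\<in>S. s \<alpha> = \<zero>"
proof (rule ccontr)
  assume "\<not> (\<forall>\<alpha>\<in>S. s \<alpha> = \<zero>)"
  define S' where "S' = {\<alpha>\<in>S. s \<alpha> \<noteq> \<zero>}"
  have S': "finite S'" "S' \<noteq> {}" "S' \<subseteq> S" using S \<open>\<not> _\<close> unfolding S'_def by auto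
  have z': "rs S' s = \<zero>" using z rs_shrink[OF S(1) S'(3)] S unfolding S'_def by auto
  define d where "d = Max (dg ` S')"
  have "d \<in> dg ` S'" unfolding d_def by (rule Max_in) (use S' in auto)
  then obtain \<alpha>0 where a0: "\<alpha>0 \<in> S'" "dg \<alpha>0 = d" by auto
  have le: "\<And>\<alpha>. \<alpha> \<in> S' \<Longrightarrow> dg \<alpha> \<le> d" unfolding d_def using S' by auto
  have C: "\<And>a. a \<in> R \<Longrightarrow> a \<in> carrier A" using RC by blast
  have "\<forall>\<alpha>\<in>S'. \<exists>v. v \<in> R \<and> v \<noteq> \<zero> \<and> (\<exists>g\<in>Lo d. rmon \<alpha> \<otimes> s \<alpha> = v \<otimes> M \<alpha> \<oplus> g)"
  proof
    fix \<alpha> assume a: "\<alpha> \<in> S'"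
    then have ae: "\<alpha> \<in> exps n" "s \<alpha> \<in> R" "s \<alpha> \<noteq> \<zero>" using S S' unfolding S'_def by auto
    obtain u \<tau> where u: "unitR u" "bij_betw \<tau> R R" "\<tau> \<zero> = \<zero>"
      "\<forall>s\<in>R. \<exists>g\<in>Lo (dg \<alpha>). rmon \<alpha> \<otimes> s = (u \<otimes> \<tau> s) \<otimes> M \<alpha> \<oplus> g"
      using RLs[OF ae(1)] by blast
    obtain g where g: "g \<in> Lo (dg \<alpha>)" "rmon \<alpha> \<otimes> s \<alpha> = (u \<otimes> \<tau> (s \<alpha>)) \<otimes> M \<alpha> \<oplus> g"
      using u(4) ae by blast
    have ts: "\<tau> (s \<alpha>) \<in> R" using u(2) ae bij_betwE by blast
    have tnz: "\<tau> (s \<alpha>) \<noteq> \<zero>"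
    proof
      assume "\<tau> (s \<alpha>) = \<zero>"
      then have "\<tau> (s \<alpha>) = \<tau> \<zero>" using u(3) by simp
      then have "s \<alpha> = \<zero>" using u(2) ae unfolding bij_betw_def inj_on_def by auto
      then show False using ae by simp
    qed
    have "u \<otimes> \<tau> (s \<alpha>) \<noteq> \<zero>" using unit_cancel[OF u(1) ts] tnz by blast
    moreover have "u \<otimes> \<tau> (s \<alpha>) \<in> R" using u(1) ts unit_R Rm by blast
    moreover have "g \<in> Lo d" using g(1) le[OF a] Lo_mono by blast
    ultimately show "\<exists>v. v \<in> R \<and> v \<noteq> \<zero> \<and> (\<exists>g\<in>Lo d. rmon \<alpha> \<otimes> s \<alpha> = v \<otimes> M \<alpha> \<oplus> g)"
      using g(2) by blast
  qed
  then obtain v where v: "\<forall>\<alpha>\<in>S'. v \<alpha> \<in> R \<and> v \<alpha> \<noteq> \<zero> \<and> (\<exists>g\<in>Lo d. rmon \<alpha> \<otimes> s \<alpha> = v \<alpha> \<otimes> M \<alpha> \<oplus> g)"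
    by (metis (no_types, lifting) bchoice)
  then obtain G where G: "\<forall>\<alpha>\<in>S'. G \<alpha> \<in> Lo d \<and> rmon \<alpha> \<otimes> s \<alpha> = v \<alpha> \<otimes> M \<alpha> \<oplus> G \<alpha>"
    by (metis (no_types, lifting) bchoice)
  have "rs S' s = lc v S' \<oplus> finsum A G S'"
    unfolding rs_def lc_def
    apply (subst finsum_addf[symmetric])
    using v G by (auto intro!: finsum_cong' simp: C Lo_carr)
  then have eq: "lc v S' \<oplus> finsum A G S' = \<zero>" using z' by simp
  have GL: "finsum A G S' \<in> Lo d" using Lo_sum[OF S'(1)] G by blast
  have vR: "\<forall>\<alpha>\<in>S'. v \<alpha> \<in> R" using v by blast
  have c1: "coef (lc v S') \<alpha>0 = v \<alpha>0"
    using coef_lc[of S' v] S' S vR a0 by (auto simp: ext_def)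
  have c2: "coef (finsum A G S') \<alpha>0 = \<zero>" using GL a0 unfolding Lo_def by auto
  have "coef (lc v S' \<oplus> finsum A G S') \<alpha>0 = v \<alpha>0"
    using coef_add[OF lc_carr[OF vR] Lo_carr[OF GL]] c1 c2 vR a0 by (simp add: RC)
  then show False using eq coef_zero v a0 by auto
qed

end

context spbw begin

lemma rex: "\<forall>a\<in>Lo m. \<exists>S s. finite S \<and> S \<subseteq> exps n \<and> (\<forall>\<alpha>\<in>S. s \<alpha> \<in> R) \<and> a = rs S s"
proof (induct m)
  case 0
  show ?case
  proof
    fix a assume "a \<in> Lo 0"
    then have "a = \<zero>" by (rule Lo0)
    then have "a = rs {} (\<lambda>_. \<zero>)" by (simp add: rs_def)
    then show "\<exists>S s. finite S \<and> S \<subseteq> exps n \<and> (\<forall>\<alpha>\<in>S. s \<alpha> \<in> R) \<and> a = rs S s" by blast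
  qed
next
  case (Suc m)
  show ?case
  proof
    fix a assume a: "a \<in> Lo (Suc m)"
    have ac: "a \<in> carrier A" using a Lo_carr by blast
    have C: "\<And>a. a \<in> R \<Longrightarrow> a \<in> carrier A" using RC by blast
    define T where "T = {\<alpha>. coef a \<alpha> \<noteq> \<zero> \<and> dg \<alpha> = m}"
    have T: "finite T" "T \<subseteq> exps n"
      using coef_fin[OF ac] coef_supp[OF ac] unfolding T_def by (auto elim: finite_subset[rotated])
    have "\<forall>\<alpha>\<in>T. \<exists>t. t \<in> R \<and> (\<exists>g\<in>Lo m. rmon \<alpha> \<otimes> t = coef a \<alpha> \<otimes> M \<alpha> \<oplus> g)"
    proof
      fix \<alpha> assume aT: "\<alpha> \<in> T"
      have ae: "\<alpha> \<in> exps n" "dg \<alpha> = m" "coef a \<alpha> \<in> R" using aT T coef_R[OF ac] unfolding T_def by auto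
      obtain u \<tau> where u: "unitR u" "bij_betw \<tau> R R"
        "\<forall>s\<in>R. \<exists>g\<in>Lo (dg \<alpha>). rmon \<alpha> \<otimes> s = (u \<otimes> \<tau> s) \<otimes> M \<alpha> \<oplus> g"
        using RLs[OF ae(1)] by blast
      obtain w where w: "w \<in> R" "u \<otimes> w = \<one>" "u \<in> R" using u(1) unfolding unitR_def by blast
      define t where "t = inv_into R \<tau> (w \<otimes> coef a \<alpha>)"
      have wc: "w \<otimes> coef a \<alpha> \<in> R" using w ae Rm by blast
      have tR: "t \<in> R" unfolding t_def using bij_betw_inv_into[OF u(2)] wc bij_betwE by blast
      have tt: "\<tau> t = w \<otimes> coef a \<alpha>" unfolding t_def by (rule bij_betw_inv_into_right[OF u(2) wc])
      obtain g where g: "g \<in> Lo (dg \<alpha>)" "rmon \<alpha> \<otimes> t = (u \<otimes> \<tau> t) \<otimes> M \<alpha> \<oplus> g" using u(3) tR by blast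
      have "u \<otimes> \<tau> t = coef a \<alpha>" unfolding tt using w ae by (simp add: m_assoc[symmetric] C)
      then show "\<exists>t. t \<in> R \<and> (\<exists>g\<in>Lo m. rmon \<alpha> \<otimes> t = coef a \<alpha> \<otimes> M \<alpha> \<oplus> g)"
        using g tR ae by auto
    qed
    then obtain t where t: "\<forall>\<alpha>\<in>T. t \<alpha> \<in> R \<and> (\<exists>g\<in>Lo m. rmon \<alpha> \<otimes> t \<alpha> = coef a \<alpha> \<otimes> M \<alpha> \<oplus> g)"
      by (metis (no_types, lifting) bchoice)
    then obtain G where G: "\<forall>\<alpha>\<in>T. G \<alpha> \<in> Lo m \<and> rmon \<alpha> \<otimes> t \<alpha> = coef a \<alpha> \<otimes> M \<alpha> \<oplus> G \<alpha>"
      by (metis (no_types, lifting) bchoice)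
    have tR: "\<forall>\<alpha>\<in>T. t \<alpha> \<in> R" using t by blast
    have cR: "\<forall>\<alpha>\<in>T. coef a \<alpha> \<in> R" using coef_R[OF ac] by blast
    have X: "rs T t = lc (coef a) T \<oplus> finsum A G T"
    proof -
      have "rs T t = (\<Oplus>\<alpha>\<in>T. coef a \<alpha> \<otimes> M \<alpha> \<oplus> G \<alpha>)"
        unfolding rs_def by (rule finsum_cong') (use G tR in \<open>auto simp: C rmon_carr Lo_carr coef_R[OF ac]\<close>)
      also have "\<dots> = lc (coef a) T \<oplus> finsum A G T"
        unfolding lc_def by (rule finsum_addf) (use G in \<open>auto simp: C Lo_carr coef_R[OF ac]\<close>)
      finally show ?thesis .
    qed
    have GL: "finsum A G T \<in> Lo m" using Lo_sum[OF T(1)] G by blast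
    have lcc: "lc (coef a) T \<in> carrier A" using lc_carr cR by blast
    have D: "a \<ominus> lc (coef a) T \<in> Lo m"
      unfolding Lo_def
    proof (intro CollectI conjI allI impI)
      show "a \<ominus> lc (coef a) T \<in> carrier A" using ac lcc by simp
      fix \<beta> assume b: "m \<le> dg \<beta>"
      have "coef (a \<ominus> lc (coef a) T) \<beta> = coef a \<beta> \<ominus> ext (coef a) T \<beta>"
        using coef_minus[OF ac lcc] coef_lc[OF T cR] by simp
      also have "\<dots> = \<zero>"
      proof (cases "dg \<beta> = m")
        case True then show ?thesis unfolding ext_def T_def using coef_R[OF ac]
          by (auto simp: C)
      next
        case False
        then have "coef a \<beta> = \<zero>" using a b unfolding Lo_def by auto
        moreover have "\<beta> \<notin> T" using False unfolding T_def by auto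
        ultimately show ?thesis unfolding ext_def by simp
      qed
      finally show "coef (a \<ominus> lc (coef a) T) \<beta> = \<zero>" .
    qed
    have GC: "finsum A G T \<in> carrier A" using GL Lo_carr by blast
    have bL: "a \<ominus> rs T t \<in> Lo m"
    proof -
      have eq: "a \<ominus> rs T t = (a \<ominus> lc (coef a) T) \<ominus> finsum A G T"
        unfolding X using ac lcc GC by (simp add: a_minus_def minus_add a_assoc)
      show ?thesis by (subst eq) (rule Lo_minus[OF D GL])
    qed
    obtain S s where Ss: "finite S" "S \<subseteq> exps n" "\<forall>\<alpha>\<in>S. s \<alpha> \<in> R" "a \<ominus> rs T t = rs S s"
      using Suc[rule_format, OF bL] by (elim exE conjE) blast
    have rsc: "rs T t \<in> carrier A" using rs_carr tR by blast
    have "a = (a \<ominus> rs T t) \<oplus> rs T t" using ac rsc by (simp add: a_minus_def a_assoc l_neg)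
    also have "\<dots> = rs S s \<oplus> rs T t" by (simp only: Ss(4))
    also have "\<dots> = rs (S \<union> T) (ext s S) \<oplus> rs (S \<union> T) (ext t T)"
    proof -
      have "rs S s = rs (S \<union> T) (ext s S)" by (rule rs_ext) (use Ss T in auto)
      moreover have "rs T t = rs (S \<union> T) (ext t T)" by (rule rs_ext) (use Ss T tR in auto)
      ultimately show ?thesis by simp
    qed
    also have "\<dots> = rs (S \<union> T) (\<lambda>\<alpha>. ext s S \<alpha> \<oplus> ext t T \<alpha>)"
      by (rule rs_add) (use Ss T tR in \<open>auto simp: ext_def\<close>)
    finally have "a = rs (S \<union> T) (\<lambda>\<alpha>. ext s S \<alpha> \<oplus> ext t T \<alpha>)" .
    moreover have "\<forall>\<alpha>\<in>S \<union> T. ext s S \<alpha> \<oplus> ext t T \<alpha> \<in> R"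
      using Ss tR by (auto simp: ext_def intro!: Ra)
    ultimately show "\<exists>S s. finite S \<and> S \<subseteq> exps n \<and> (\<forall>\<alpha>\<in>S. s \<alpha> \<in> R) \<and> a = rs S s"
      using Ss T by (intro exI[of _ "S \<union> T"] exI[of _ "\<lambda>\<alpha>. ext s S \<alpha> \<oplus> ext t T \<alpha>"]) auto
  qed
qed

lemma rex': assumes "a \<in> carrier A"
  shows "\<exists>S s. finite S \<and> S \<subseteq> exps n \<and> (\<forall>\<alpha>\<in>S. s \<alpha> \<in> R) \<and> a = rs S s"
proof -
  define m where "m = Suc (Max (insert 0 (dg ` {\<alpha>. coef a \<alpha> \<noteq> \<zero>})))"
  have "a \<in> Lo m" unfolding Lo_def m_def
  proof (intro CollectI conjI allI impI)
    show "a \<in> carrier A" by (rule assms)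
    fix \<alpha> assume h: "Suc (Max (insert 0 (dg ` {\<alpha>. coef a \<alpha> \<noteq> \<zero>}))) \<le> dg \<alpha>"
    show "coef a \<alpha> = \<zero>"
    proof (rule ccontr)
      assume "coef a \<alpha> \<noteq> \<zero>"
      then have "dg \<alpha> \<le> Max (insert 0 (dg ` {\<alpha>. coef a \<alpha> \<noteq> \<zero>}))"
        using coef_fin[OF assms] by (intro Max_ge) auto
      then show False using h by simp
    qed
  qed
  then show ?thesis using rex by blast
qed

end

context spbw begin

abbreviation sinv where "sinv i r \<equiv> inv_into R (\<sigma> i) r"

lemma sbij': "i \<in> {1..n} \<Longrightarrow> bij_betw (\<sigma> i) R R" using sbij by blast

lemma sinv_R: assumes "i \<in> {1..n}" "r \<in> R" shows "sinv i r \<in> R"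
  using bij_betwE[OF bij_betw_inv_into[OF sbij'[OF assms(1)]]] assms(2) by blast

lemma sig_sinv: assumes "i \<in> {1..n}" "r \<in> R" shows "\<sigma> i (sinv i r) = r"
  by (rule bij_betw_inv_into_right[OF sbij'[OF assms(1)] assms(2)])

lemma sig_inj: assumes "i \<in> {1..n}" "a \<in> R" "b \<in> R" "\<sigma> i a = \<sigma> i b" shows "a = b"
  using sbij'[OF assms(1)] assms(2-4) unfolding bij_betw_def inj_on_def by blast

definition LSo :: "'a set" where
  "LSo = {r0 \<oplus> (\<Oplus>k\<in>{1..n}. x k \<otimes> r k) | r0 r. r0 \<in> R \<and> (\<forall>k\<in>{1..n}. r k \<in> R)}"

lemma LSo_eq: "lin_span (opp_ring A) R x n = LSo"
  unfolding lin_span_def LSo_def by simp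

lemma LSoI: "r0 \<in> R \<Longrightarrow> (\<forall>k\<in>{1..n}. r k \<in> R) \<Longrightarrow> r0 \<oplus> (\<Oplus>k\<in>{1..n}. x k \<otimes> r k) \<in> LSo"
  unfolding LSo_def by blast

lemma LSo_carr: "p \<in> LSo \<Longrightarrow> p \<in> carrier A"
  unfolding LSo_def by (auto simp: RC xC Pi_def intro!: finsum_closed)

lemma LSo_R: assumes "r \<in> R" shows "r \<in> LSo"
proof -
  have z0: "(\<Oplus>k\<in>{1..n}. x k \<otimes> \<zero>) = (\<Oplus>k\<in>{1..n}. \<zero>)" by (rule finsum_cong') (auto simp: xC)
  have z: "(\<Oplus>k\<in>{1..n}. x k \<otimes> \<zero>) = \<zero>" unfolding z0 by simp
  have "r = r \<oplus> (\<Oplus>k\<in>{1..n}. x k \<otimes> \<zero>)" unfolding z using assms by (simp add: RC)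
  then show ?thesis using LSoI[of r "\<lambda>_. \<zero>"] assms by simp
qed

lemma LSo_xr: assumes "l \<in> {1..n}" "r \<in> R" shows "x l \<otimes> r \<in> LSo"
proof -
  have "(\<Oplus>k\<in>{1..n}. x k \<otimes> (if k = l then r else \<zero>)) = (\<Oplus>k\<in>{1..n}. if l = k then x k \<otimes> r else \<zero>)"
    by (rule finsum_cong') (use assms in \<open>auto simp: xC RC\<close>)
  also have "\<dots> = x l \<otimes> r" by (rule add.finprod_singleton) (use assms in \<open>auto simp: xC RC\<close>)
  finally have eq: "x l \<otimes> r = \<zero> \<oplus> (\<Oplus>k\<in>{1..n}. x k \<otimes> (if k = l then r else \<zero>))"
    using assms by (simp add: xC RC)
  have mem: "\<zero> \<oplus> (\<Oplus>k\<in>{1..n}. x k \<otimes> (if k = l then r else \<zero>)) \<in> LSo"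
    by (rule LSoI) (use assms in auto)
  show ?thesis by (subst eq) (rule mem)
qed

lemma LSo_add: assumes "p \<in> LSo" "q \<in> LSo" shows "p \<oplus> q \<in> LSo"
proof -
  obtain r0 r where r: "r0 \<in> R" "\<forall>k\<in>{1..n}. r k \<in> R" "p = r0 \<oplus> (\<Oplus>k\<in>{1..n}. x k \<otimes> r k)"
    using assms(1) unfolding LSo_def by blast
  obtain s0 s where s: "s0 \<in> R" "\<forall>k\<in>{1..n}. s k \<in> R" "q = s0 \<oplus> (\<Oplus>k\<in>{1..n}. x k \<otimes> s k)"
    using assms(2) unfolding LSo_def by blast
  have C: "\<And>a. a \<in> R \<Longrightarrow> a \<in> carrier A" using RC by blast
  have sm: "(\<Oplus>k\<in>{1..n}. x k \<otimes> (r k \<oplus> s k)) = (\<Oplus>k\<in>{1..n}. x k \<otimes> r k) \<oplus> (\<Oplus>k\<in>{1..n}. x k \<otimes> s k)"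
  proof -
    have "(\<Oplus>k\<in>{1..n}. x k \<otimes> (r k \<oplus> s k)) = (\<Oplus>k\<in>{1..n}. x k \<otimes> r k \<oplus> x k \<otimes> s k)"
      by (rule finsum_cong') (use r s in \<open>auto simp: xC C r_distr\<close>)
    also have "\<dots> = (\<Oplus>k\<in>{1..n}. x k \<otimes> r k) \<oplus> (\<Oplus>k\<in>{1..n}. x k \<otimes> s k)"
      by (rule finsum_addf) (use r s in \<open>auto simp: xC C\<close>)
    finally show ?thesis .
  qed
  have fc: "(\<Oplus>k\<in>{1..n}. x k \<otimes> r k) \<in> carrier A" "(\<Oplus>k\<in>{1..n}. x k \<otimes> s k) \<in> carrier A"
    using r s by (auto simp: C xC Pi_def intro!: finsum_closed)
  have eq: "p \<oplus> q = (r0 \<oplus> s0) \<oplus> (\<Oplus>k\<in>{1..n}. x k \<otimes> (r k \<oplus> s k))"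
    unfolding sm r(3) s(3) using r(1) s(1) fc
    by (simp add: C a_ac)
  have mem: "(r0 \<oplus> s0) \<oplus> (\<Oplus>k\<in>{1..n}. x k \<otimes> (r k \<oplus> s k)) \<in> LSo"
    by (rule LSoI) (use r s in \<open>auto intro: Ra\<close>)
  show ?thesis by (subst eq) (rule mem)
qed

lemma LSo_neg: assumes "p \<in> LSo" shows "\<ominus> p \<in> LSo"
proof -
  obtain r0 r where r: "r0 \<in> R" "\<forall>k\<in>{1..n}. r k \<in> R" "p = r0 \<oplus> (\<Oplus>k\<in>{1..n}. x k \<otimes> r k)"
    using assms(1) unfolding LSo_def by blast
  have C: "\<And>a. a \<in> R \<Longrightarrow> a \<in> carrier A" using RC by blast
  have "\<ominus> p = p \<otimes> (\<ominus> \<one>)" using LSo_carr[OF assms] by (simp add: r_minus)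
  also have "\<dots> = r0 \<otimes> (\<ominus> \<one>) \<oplus> (\<Oplus>k\<in>{1..n}. x k \<otimes> (r k \<otimes> (\<ominus> \<one>)))"
    unfolding r(3) using r by (auto simp: l_distr finsum_ldistr Pi_def C xC m_assoc finsum_closed intro!: finsum_cong')
  finally have eq: "\<ominus> p = r0 \<otimes> (\<ominus> \<one>) \<oplus> (\<Oplus>k\<in>{1..n}. x k \<otimes> (r k \<otimes> (\<ominus> \<one>)))" .
  have mem: "r0 \<otimes> (\<ominus> \<one>) \<oplus> (\<Oplus>k\<in>{1..n}. x k \<otimes> (r k \<otimes> (\<ominus> \<one>))) \<in> LSo"
    by (rule LSoI) (use r Rm[OF _ Rn[OF R1]] in auto)
  show ?thesis by (subst eq) (rule mem)
qed

lemma LSo_minus: "p \<in> LSo \<Longrightarrow> q \<in> LSo \<Longrightarrow> p \<ominus> q \<in> LSo"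
  unfolding a_minus_def by (intro LSo_add LSo_neg)

lemma LSo_sum: "finite S \<Longrightarrow> \<forall>\<alpha>\<in>S. f \<alpha> \<in> LSo \<Longrightarrow> finsum A f S \<in> LSo"
proof (induct S rule: finite_induct)
  case empty then show ?case by (simp add: LSo_R)
next
  case (insert a S)
  then show ?case by (subst finsum_insert) (auto intro!: LSo_add simp: Pi_def LSo_carr)
qed

lemma rx_LSo: assumes "l \<in> {1..n}" "r \<in> R" shows "r \<otimes> x l \<in> LSo"
proof -
  let ?s = "sinv l r"
  have s: "?s \<in> R" "\<sigma> l ?s = r" using sinv_R sig_sinv assms by auto
  have "x l \<otimes> ?s = r \<otimes> x l \<oplus> \<delta> l ?s" using comm[OF assms(1) s(1)] s by simp
  then have "r \<otimes> x l = x l \<otimes> ?s \<ominus> \<delta> l ?s"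
    using assms s del_R by (simp add: RC xC a_minus_def a_assoc r_neg)
  then show ?thesis using LSo_minus[OF LSo_xr[OF assms(1) s(1)] LSo_R[OF del_R[OF assms(1) s(1)]]] by simp
qed

lemma LS_LSo: assumes "p \<in> lin_span A R x n" shows "p \<in> LSo"
proof -
  obtain r0 r where r: "r0 \<in> R" "\<forall>k\<in>{1..n}. r k \<in> R" "p = r0 \<oplus> (\<Oplus>k\<in>{1..n}. r k \<otimes> x k)"
    using assms unfolding lin_span_def by blast
  show ?thesis unfolding r(3)
    by (intro LSo_add LSo_R LSo_sum) (use r rx_LSo in auto)
qed

lemma LSo_Lo: assumes "p \<in> LSo" shows "p \<in> Lo 2"
proof -
  obtain r0 r where r: "r0 \<in> R" "\<forall>k\<in>{1..n}. r k \<in> R" "p = r0 \<oplus> (\<Oplus>k\<in>{1..n}. x k \<otimes> r k)"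
    using assms(1) unfolding LSo_def by blast
  have "x k \<otimes> r k \<in> Lo 2" if k: "k \<in> {1..n}" for k
  proof -
    have "x k \<otimes> r k = \<sigma> k (r k) \<otimes> M (e k) \<oplus> \<delta> k (r k)" using comm[OF k] r k x_mon[OF k] by simp
    moreover have "\<sigma> k (r k) \<otimes> M (e k) \<in> Lo 2" using k r sig_R e_exps dg_e by (intro Lo_smon) auto
    moreover have "\<delta> k (r k) \<in> Lo 2" using Lo_R[of _ 1] del_R k r by (simp add: numeral_2_eq_2)
    ultimately show ?thesis using Lo_add by simp
  qed
  then show ?thesis unfolding r(3) using Lo_R[of r0 1] r(1)
    by (intro Lo_add Lo_sum) (auto simp: numeral_2_eq_2)
qed

end

context spbw begin

lemma op_free: assumes a: "a \<in> carrier A"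
  shows "\<exists>!c. (\<forall>\<alpha>. c \<alpha> \<in> R) \<and> (\<forall>\<alpha>. \<alpha> \<notin> exps n \<longrightarrow> c \<alpha> = \<zero>) \<and> finite {\<alpha>. c \<alpha> \<noteq> \<zero>} \<and>
     a = rs {\<alpha>. c \<alpha> \<noteq> \<zero>} c"
proof -
  obtain S s where Ss: "finite S" "S \<subseteq> exps n" "\<forall>\<alpha>\<in>S. s \<alpha> \<in> R" "a = rs S s" using rex'[OF a] by blast
  let ?c = "ext s S"
  have P: "(\<forall>\<alpha>. ?c \<alpha> \<in> R) \<and> (\<forall>\<alpha>. \<alpha> \<notin> exps n \<longrightarrow> ?c \<alpha> = \<zero>) \<and> finite {\<alpha>. ?c \<alpha> \<noteq> \<zero>}"
    using Ss by (auto simp: ext_def elim: finite_subset[rotated])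
  have "rs {\<alpha>. ?c \<alpha> \<noteq> \<zero>} ?c = rs S ?c"
    by (rule rs_shrink) (use Ss in \<open>auto simp: ext_def\<close>)
  also have "\<dots> = rs S s" by (rule rs_cong) (use Ss in \<open>auto simp: ext_def\<close>)
  finally have E: "a = rs {\<alpha>. ?c \<alpha> \<noteq> \<zero>} ?c" using Ss by simp
  show ?thesis
  proof (rule ex1I[of _ ?c])
    show "(\<forall>\<alpha>. ?c \<alpha> \<in> R) \<and> (\<forall>\<alpha>. \<alpha> \<notin> exps n \<longrightarrow> ?c \<alpha> = \<zero>) \<and> finite {\<alpha>. ?c \<alpha> \<noteq> \<zero>} \<and>
     a = rs {\<alpha>. ?c \<alpha> \<noteq> \<zero>} ?c" using P E by blast
  next
    fix d assume d: "(\<forall>\<alpha>. d \<alpha> \<in> R) \<and> (\<forall>\<alpha>. \<alpha> \<notin> exps n \<longrightarrow> d \<alpha> = \<zero>) \<and> finite {\<alpha>. d \<alpha> \<noteq> \<zero>} \<and>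
     a = rs {\<alpha>. d \<alpha> \<noteq> \<zero>} d"
    define U where "U = {\<alpha>. ?c \<alpha> \<noteq> \<zero>} \<union> {\<alpha>. d \<alpha> \<noteq> \<zero>}"
    have U: "finite U" "U \<subseteq> exps n" using P d unfolding U_def by auto
    have cR: "\<forall>\<alpha>. ?c \<alpha> \<in> R" using P by blast
    have dR: "\<forall>\<alpha>. d \<alpha> \<in> R" using d by blast
    have e1': "rs {\<alpha>. ?c \<alpha> \<noteq> \<zero>} ?c = rs U ?c" by (rule rs_shrink) (use U cR in \<open>auto simp: U_def\<close>)
    have e2': "rs {\<alpha>. d \<alpha> \<noteq> \<zero>} d = rs U d" by (rule rs_shrink) (use U dR in \<open>auto simp: U_def\<close>)
    have e1: "a = rs U ?c" using E e1' by simp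
    have e2: "a = rs U d" using d e2' by simp
    have s1: "rs U d \<oplus> rs U (\<lambda>\<alpha>. \<ominus> ?c \<alpha>) = rs U (\<lambda>\<alpha>. d \<alpha> \<oplus> \<ominus> ?c \<alpha>)"
      by (rule rs_add) (use U cR dR Rn in auto)
    have s2: "\<ominus> rs U ?c = rs U (\<lambda>\<alpha>. \<ominus> ?c \<alpha>)" by (rule rs_neg) (use U cR in auto)
    have "rs U (\<lambda>\<alpha>. d \<alpha> \<oplus> \<ominus> ?c \<alpha>) = a \<oplus> \<ominus> a"
      by (simp only: s1[symmetric] s2[symmetric] e1[symmetric] e2[symmetric])
    then have zz: "rs U (\<lambda>\<alpha>. d \<alpha> \<oplus> \<ominus> ?c \<alpha>) = \<zero>" using a by (simp add: r_neg)
    have inR: "\<forall>\<alpha>\<in>U. d \<alpha> \<oplus> \<ominus> ?c \<alpha> \<in> R" using cR dR by (auto intro: Ra Rn)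
    have z: "\<forall>\<alpha>\<in>U. d \<alpha> \<oplus> \<ominus> ?c \<alpha> = \<zero>" by (rule rind[OF U(1) U(2) inR zz])
    show "d = ?c"
    proof
      fix \<alpha>
      show "d \<alpha> = ?c \<alpha>"
      proof (cases "\<alpha> \<in> U")
        case True
        then have "d \<alpha> \<oplus> \<ominus> ?c \<alpha> = \<zero>" using z by blast
        have "d \<alpha> = (d \<alpha> \<oplus> \<ominus> ?c \<alpha>) \<oplus> ?c \<alpha>"
          using cR dR by (simp add: a_assoc l_neg RC del: ext_def)
        also have "\<dots> = ?c \<alpha>" unfolding \<open>d \<alpha> \<oplus> \<ominus> ?c \<alpha> = \<zero>\<close> using cR by (simp add: RC del: ext_def)
        finally show ?thesis .
      next
        case False then show ?thesis unfolding U_def by auto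
      qed
    qed
  qed
qed

lemma op_iii: assumes i: "i \<in> {1..n}" and r: "r \<in> R" "r \<noteq> \<zero>"
  shows "\<exists>c\<in>R - {\<zero>}. r \<otimes> x i \<ominus> x i \<otimes> c \<in> R"
proof -
  let ?c = "sinv i r"
  have c: "?c \<in> R" "\<sigma> i ?c = r" using sinv_R sig_sinv i r by auto
  have cnz: "?c \<noteq> \<zero>" using c sig0[OF i] r by auto
  have "x i \<otimes> ?c = r \<otimes> x i \<oplus> \<delta> i ?c" using comm[OF i c(1)] c by simp
  then have "r \<otimes> x i \<ominus> x i \<otimes> ?c = \<ominus> \<delta> i ?c"
    using c r i del_R[OF i c(1)] by (simp add: RC xC a_minus_def minus_add a_assoc[symmetric] r_neg)
  note eq = this
  show ?thesis
  proof (rule bexI[of _ ?c])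
    show "r \<otimes> x i \<ominus> x i \<otimes> ?c \<in> R" unfolding eq by (rule Rn[OF del_R[OF i c(1)]])
    show "?c \<in> R - {\<zero>}" using c cnz by auto
  qed
qed

lemma op_iv: assumes i: "i \<in> {1..n}" and j: "j \<in> {1..n}"
  shows "\<exists>c\<in>R - {\<zero>}. x i \<otimes> x j \<ominus> x j \<otimes> (x i \<otimes> c) \<in> LSo"
proof -
  obtain c where c: "c \<in> R - {\<zero>}" "x i \<otimes> x j \<ominus> c \<otimes> x j \<otimes> x i \<in> lin_span A R x n"
    using rel i j by blast
  define c1 where "c1 = sinv j c"
  define c2 where "c2 = sinv i c1"
  have c1: "c1 \<in> R" "\<sigma> j c1 = c" unfolding c1_def using sinv_R sig_sinv j c by auto
  have c2: "c2 \<in> R" "\<sigma> i c2 = c1" unfolding c2_def using sinv_R sig_sinv i c1 by auto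
  have c2nz: "c2 \<noteq> \<zero>" using c c1 c2 sig0[OF i] sig0[OF j] by auto
  have C: "\<And>a. a \<in> R \<Longrightarrow> a \<in> carrier A" using RC by blast
  have xx: "x i \<in> carrier A" "x j \<in> carrier A" using i j xC by auto
  have dR: "\<delta> j c1 \<in> R" "\<delta> i c2 \<in> R" using del_R i j c1 c2 by auto
  have "x j \<otimes> (x i \<otimes> c2) = c \<otimes> x j \<otimes> x i \<oplus> (\<delta> j c1 \<otimes> x i \<oplus> x j \<otimes> \<delta> i c2)"
    unfolding comm[OF i c2(1)] c2(2) using xx c1 c2 dR c(1)
    by (simp add: r_distr m_assoc[symmetric] C comm[OF j c1(1)] l_distr a_assoc)
  then have e: "c \<otimes> x j \<otimes> x i \<ominus> x j \<otimes> (x i \<otimes> c2) = \<ominus> (\<delta> j c1 \<otimes> x i \<oplus> x j \<otimes> \<delta> i c2)"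
    using xx c1 c2 dR c by (simp add: C a_minus_def minus_add a_assoc[symmetric] r_neg)
  have m1: "c \<otimes> x j \<otimes> x i \<ominus> x j \<otimes> (x i \<otimes> c2) \<in> LSo"
    unfolding e using rx_LSo[OF i dR(1)] LSo_xr[OF j dR(2)] by (intro LSo_neg LSo_add)
  have "x i \<otimes> x j \<ominus> x j \<otimes> (x i \<otimes> c2) = (x i \<otimes> x j \<ominus> c \<otimes> x j \<otimes> x i) \<oplus> (c \<otimes> x j \<otimes> x i \<ominus> x j \<otimes> (x i \<otimes> c2))"
    using xx c2 c by (simp add: C a_minus_def a_assoc r_neg1 r_neg2)
  then have "x i \<otimes> x j \<ominus> x j \<otimes> (x i \<otimes> c2) \<in> LSo"
    using LSo_add[OF LS_LSo[OF c(2)] m1] by simp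
  then show ?thesis using c2 c2nz by blast
qed

lemma op_assoc: "assoc_maps (opp_ring A) R x n (\<lambda>i r. sinv i r) (\<lambda>i r. \<ominus> \<delta> i (sinv i r))"
  unfolding assoc_maps_def
proof (intro ballI conjI)
  fix i r assume i: "i \<in> {1..n}" and r: "r \<in> R"
  let ?s = "sinv i r"
  have s: "?s \<in> R" "\<sigma> i ?s = r" using sinv_R sig_sinv i r by auto
  show "?s \<in> R" by (rule s(1))
  show "\<ominus> \<delta> i ?s \<in> R" using Rn del_R i s by blast
  have "x i \<otimes> ?s = r \<otimes> x i \<oplus> \<delta> i ?s" using comm[OF i s(1)] s by simp
  then show "x i \<otimes>\<^bsub>opp_ring A\<^esub> r = ?s \<otimes>\<^bsub>opp_ring A\<^esub> x i \<oplus>\<^bsub>opp_ring A\<^esub> \<ominus> \<delta> i ?s"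
    using s r i del_R[OF i s(1)] by (simp add: RC xC a_assoc r_neg)
qed

end

context spbw begin

lemma op_assoc_bij:
  assumes am2: "assoc_maps (opp_ring A) R x n \<sigma>' \<delta>'" and i: "i \<in> {1..n}"
  shows "bij_betw (\<sigma>' i) R R"
proof -
  have eqv: "\<sigma>' i r = sinv i r" if r: "r \<in> R" for r
  proof -
    have h: "\<sigma>' i r \<in> R" "\<delta>' i r \<in> R" "r \<otimes> x i = x i \<otimes> \<sigma>' i r \<oplus> \<delta>' i r"
      using am2 i r unfolding assoc_maps_def by auto
    let ?t = "\<sigma>' i r"
    have "r \<otimes> x i \<oplus> \<zero> = \<sigma> i ?t \<otimes> x i \<oplus> (\<delta> i ?t \<oplus> \<delta>' i r)"
      using h r i sig_R del_R by (simp add: comm[OF i h(1)] RC xC a_assoc)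
    then have "r = \<sigma> i ?t" by (rule top_x[OF i r R0 sig_R[OF i h(1)] Ra[OF del_R[OF i h(1)] h(2)]])
    then have "sinv i r = sinv i (\<sigma> i ?t)" by simp
    also have "\<dots> = ?t" using sbij'[OF i] h(1) unfolding bij_betw_def by (simp add: inv_into_f_f)
    finally show ?thesis by simp
  qed
  have "bij_betw (sinv i) R R" by (rule bij_betw_inv_into[OF sbij'[OF i]])
  then show ?thesis using bij_betw_cong[of R "\<sigma>' i" "sinv i" R] eqv by simp
qed

lemma op_cunit:
  assumes i: "i \<in> {1..n}" and j: "j \<in> {1..n}" and ij: "i < j" and c: "c \<in> R" "c \<noteq> \<zero>"
    and L: "x i \<otimes> x j \<ominus> x j \<otimes> (x i \<otimes> c) \<in> LSo"
  shows "\<exists>d\<in>R. d \<otimes> c = \<one> \<and> c \<otimes> d = \<one>"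
proof -
  obtain cij where cij: "cij \<in> R - {\<zero>}" "x j \<otimes> x i \<ominus> cij \<otimes> x i \<otimes> x j \<in> lin_span A R x n"
    using rel i j by blast
  obtain v where v: "v \<in> R" "cij \<otimes> v = \<one>" "v \<otimes> cij = \<one>" using cunit i j ij cij by blast
  have C: "\<And>a. a \<in> R \<Longrightarrow> a \<in> carrier A" using RC by blast
  have xx: "x i \<in> carrier A" "x j \<in> carrier A" using i j xC by auto
  have cijR: "cij \<in> R" using cij by blast
  define p where "p = x j \<otimes> x i \<ominus> cij \<otimes> x i \<otimes> x j"
  have pc: "p \<in> carrier A" unfolding p_def using xx cijR by (simp add: C)
  have xji: "x j \<otimes> x i = cij \<otimes> (x i \<otimes> x j) \<oplus> p"
    unfolding p_def using xx cijR by (simp add: C a_minus_def m_assoc a_lcomm r_neg)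
  define \<beta> where "\<beta> = (e j)(i := Suc (e j i))"
  have ejl: "\<forall>l<i. e j l = 0" using ij unfolding e_def by auto
  have M\<beta>: "x i \<otimes> x j = M \<beta>" unfolding \<beta>_def x_mon[OF j] by (rule mon_step[OF i ejl])
  have \<beta>e: "\<beta> \<in> exps n" "dg \<beta> = 2"
    unfolding \<beta>_def using exps_upd[OF e_exps[OF j] i] dg_upd[OF i, of "e j"] dg_e[OF j] by auto
  define s where "s = \<sigma> j (\<sigma> i c)"
  have sR: "\<sigma> i c \<in> R" "s \<in> R" "\<delta> j (\<sigma> i c) \<in> R" "\<delta> i c \<in> R"
    unfolding s_def using sig_R del_R i j c by auto
  define G where "G = s \<otimes> p \<oplus> (\<delta> j (\<sigma> i c) \<otimes> x i \<oplus> x j \<otimes> \<delta> i c)"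
  have "x j \<otimes> (x i \<otimes> c) = (x j \<otimes> \<sigma> i c) \<otimes> x i \<oplus> x j \<otimes> \<delta> i c"
    unfolding comm[OF i c(1)] using xx sR by (simp add: r_distr m_assoc C)
  also have "\<dots> = s \<otimes> (x j \<otimes> x i) \<oplus> (\<delta> j (\<sigma> i c) \<otimes> x i \<oplus> x j \<otimes> \<delta> i c)"
    unfolding comm[OF j sR(1)] s_def[symmetric] using xx sR by (simp add: l_distr m_assoc C a_assoc)
  also have "\<dots> = (s \<otimes> cij) \<otimes> M \<beta> \<oplus> G"
    unfolding xji G_def M\<beta> using xx sR pc cijR by (simp add: r_distr m_assoc C a_assoc)
  finally have e1: "x j \<otimes> (x i \<otimes> c) = (s \<otimes> cij) \<otimes> M \<beta> \<oplus> G" .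
  have GL: "G \<in> Lo 2" unfolding G_def
  proof (intro Lo_add)
    show "s \<otimes> p \<in> Lo 2" using Lo_smul[OF sR(2) LSo_Lo[OF LS_LSo]] cij(2) p_def by blast
    show "\<delta> j (\<sigma> i c) \<otimes> x i \<in> Lo 2" unfolding x_mon[OF i]
      by (rule Lo_smon[OF sR(3) e_exps[OF i]]) (simp add: dg_e[OF i])
    show "x j \<otimes> \<delta> i c \<in> Lo 2" by (rule LSo_Lo[OF LSo_xr[OF j sR(4)]])
  qed
  define Lv where "Lv = x i \<otimes> x j \<ominus> x j \<otimes> (x i \<otimes> c)"
  have Lc: "Lv \<in> Lo 2" unfolding Lv_def by (rule LSo_Lo[OF L])
  have Gc: "G \<in> carrier A" using GL Lo_carr by blast
  have Lvc: "Lv \<in> carrier A" using Lc Lo_carr by blast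
  have "M \<beta> = Lv \<oplus> x j \<otimes> (x i \<otimes> c)"
    unfolding Lv_def M\<beta>[symmetric] using xx c by (simp add: C a_minus_def a_assoc l_neg)
  also have "\<dots> = (s \<otimes> cij) \<otimes> M \<beta> \<oplus> (Lv \<oplus> G)"
    unfolding e1 using Lvc Gc sR cijR by (simp add: C a_ac Rm)
  finally have e2: "\<one> \<otimes> M \<beta> \<oplus> \<zero> = (s \<otimes> cij) \<otimes> M \<beta> \<oplus> (Lv \<oplus> G)" by simp
  have one: "\<one> = s \<otimes> cij"
    by (rule top_eq[OF \<beta>e(1) R1 _ Rm[OF sR(2) cijR] _ e2]) (use \<beta>e Lc GL Lo_add in auto)
  have sv: "s = v"
  proof -
    have "s = s \<otimes> (cij \<otimes> v)" using v sR by (simp add: C)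
    also have "\<dots> = (s \<otimes> cij) \<otimes> v" using v sR cijR by (simp add: C m_assoc)
    also have "\<dots> = v" using one[symmetric] v by (simp add: C)
    finally show ?thesis .
  qed
  define d where "d = sinv i (sinv j cij)"
  have dR: "sinv j cij \<in> R" "d \<in> R" unfolding d_def using sinv_R i j cijR by auto
  have sd: "\<sigma> j (\<sigma> i d) = cij" unfolding d_def using sig_sinv i j cijR dR by simp
  have sid: "\<sigma> i d \<in> R" using sig_R i dR by blast
  have "\<sigma> j (\<sigma> i (c \<otimes> d)) = \<sigma> j (\<sigma> i \<one>)"
    using sigm[OF i c(1) dR(2)] sigm[OF j sR(1) sid] sd one sig1 i j s_def by simp
  then have "\<sigma> i (c \<otimes> d) = \<sigma> i \<one>" by (rule sig_inj[OF j sig_R[OF i Rm[OF c(1) dR(2)]] sig_R[OF i R1]])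
  then have cd: "c \<otimes> d = \<one>" by (rule sig_inj[OF i Rm[OF c(1) dR(2)] R1])
  have "\<sigma> j (\<sigma> i (d \<otimes> c)) = \<sigma> j (\<sigma> i \<one>)"
    using sigm[OF i dR(2) c(1)] sigm[OF j sid sR(1)] sd v sv sig1 i j s_def by simp
  then have "\<sigma> i (d \<otimes> c) = \<sigma> i \<one>" by (rule sig_inj[OF j sig_R[OF i Rm[OF dR(2) c(1)]] sig_R[OF i R1]])
  then have dc: "d \<otimes> c = \<one>" by (rule sig_inj[OF i Rm[OF dR(2) c(1)] R1])
  show ?thesis using dR cd dc by blast
qed

end


theorem proposition4p1:
  fixes A :: "('a, 'b) ring_scheme" and R :: "'a set" and x :: "nat \<Rightarrow> 'a" and n :: nat
    and \<sigma> \<delta> :: "nat \<Rightarrow> 'a \<Rightarrow> 'a"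
  assumes "bijective_skew_PBW A R x n"
    and "assoc_maps A R x n \<sigma> \<delta>"
  shows "bijective_skew_PBW (opp_ring A) R x n \<and>
         assoc_maps (opp_ring A) R x n
           (\<lambda>i r. inv_into R (\<sigma> i) r)
           (\<lambda>i r. \<ominus>\<^bsub>A\<^esub> \<delta> i (inv_into R (\<sigma> i) r))"
proof -
  have sk: "skew_PBW A R x n"
    and b2: "\<forall>\<sigma> \<delta>. assoc_maps A R x n \<sigma> \<delta> \<longrightarrow> (\<forall>i\<in>{1..n}. bij_betw (\<sigma> i) R R)"
    and b3: "\<forall>i\<in>{1..n}. \<forall>j\<in>{1..n}. \<forall>c\<in>R - {\<zero>\<^bsub>A\<^esub>}. i < j \<longrightarrow>
         x j \<otimes>\<^bsub>A\<^esub> x i \<ominus>\<^bsub>A\<^esub> c \<otimes>\<^bsub>A\<^esub> x i \<otimes>\<^bsub>A\<^esub> x j \<in> lin_span A R x n \<longrightarrow>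
         (\<exists>d\<in>R. c \<otimes>\<^bsub>A\<^esub> d = \<one>\<^bsub>A\<^esub> \<and> d \<otimes>\<^bsub>A\<^esub> c = \<one>\<^bsub>A\<^esub>)"
    using assms(1) unfolding bijective_skew_PBW_def by auto
  have spbw: "spbw A R x n \<sigma> \<delta>"
    using sk b2 b3 assms(2) unfolding skew_PBW_def spbw_def spbw_axioms_def by blast
  interpret S: spbw A R x n \<sigma> \<delta> by (rule spbw)
  interpret O: ring "opp_ring A" by (rule S.opp_ring)
  have part1: "skew_PBW (opp_ring A) R x n"
    unfolding skew_PBW_def
  proof (intro conjI)
    show "ring (opp_ring A)" by (rule S.opp_ring)
    show "subring R (opp_ring A)" by (rule S.opp_subring[OF S.sub])
    show "\<forall>i\<in>{1..n}. x i \<in> carrier (opp_ring A)" using S.xc by simp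
    show "\<forall>a\<in>carrier (opp_ring A). \<exists>!c. (\<forall>\<alpha>. c \<alpha> \<in> R) \<and>
          (\<forall>\<alpha>. \<alpha> \<notin> exps n \<longrightarrow> c \<alpha> = \<zero>\<^bsub>opp_ring A\<^esub>) \<and> finite {\<alpha>. c \<alpha> \<noteq> \<zero>\<^bsub>opp_ring A\<^esub>} \<and>
          a = (\<Oplus>\<^bsub>opp_ring A\<^esub>\<alpha>\<in>{\<alpha>. c \<alpha> \<noteq> \<zero>\<^bsub>opp_ring A\<^esub>}. c \<alpha> \<otimes>\<^bsub>opp_ring A\<^esub> mon (opp_ring A) x n \<alpha>)"
      using S.op_free unfolding S.rs_def by simp
    show "\<forall>i\<in>{1..n}. \<forall>r\<in>R - {\<zero>\<^bsub>opp_ring A\<^esub>}. \<exists>c\<in>R - {\<zero>\<^bsub>opp_ring A\<^esub>}.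
         x i \<otimes>\<^bsub>opp_ring A\<^esub> r \<ominus>\<^bsub>opp_ring A\<^esub> c \<otimes>\<^bsub>opp_ring A\<^esub> x i \<in> R"
      using S.op_iii by simp
    show "\<forall>i\<in>{1..n}. \<forall>j\<in>{1..n}. \<exists>c\<in>R - {\<zero>\<^bsub>opp_ring A\<^esub>}.
         x j \<otimes>\<^bsub>opp_ring A\<^esub> x i \<ominus>\<^bsub>opp_ring A\<^esub> c \<otimes>\<^bsub>opp_ring A\<^esub> x i \<otimes>\<^bsub>opp_ring A\<^esub> x j
           \<in> lin_span (opp_ring A) R x n"
      using S.op_iv by (simp add: S.LSo_eq)
  qed
  have part2: "\<forall>\<sigma> \<delta>. assoc_maps (opp_ring A) R x n \<sigma> \<delta> \<longrightarrow> (\<forall>i\<in>{1..n}. bij_betw (\<sigma> i) R R)"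
    using S.op_assoc_bij by blast
  have part3: "\<forall>i\<in>{1..n}. \<forall>j\<in>{1..n}. \<forall>c\<in>R - {\<zero>\<^bsub>opp_ring A\<^esub>}. i < j \<longrightarrow>
         x j \<otimes>\<^bsub>opp_ring A\<^esub> x i \<ominus>\<^bsub>opp_ring A\<^esub> c \<otimes>\<^bsub>opp_ring A\<^esub> x i \<otimes>\<^bsub>opp_ring A\<^esub> x j
            \<in> lin_span (opp_ring A) R x n \<longrightarrow>
         (\<exists>d\<in>R. c \<otimes>\<^bsub>opp_ring A\<^esub> d = \<one>\<^bsub>opp_ring A\<^esub> \<and> d \<otimes>\<^bsub>opp_ring A\<^esub> c = \<one>\<^bsub>opp_ring A\<^esub>)"
  proof (intro ballI impI)
    fix i j c assume h: "i \<in> {1..n}" "j \<in> {1..n}" "c \<in> R - {\<zero>\<^bsub>opp_ring A\<^esub>}" "i < j"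
      "x j \<otimes>\<^bsub>opp_ring A\<^esub> x i \<ominus>\<^bsub>opp_ring A\<^esub> c \<otimes>\<^bsub>opp_ring A\<^esub> x i \<otimes>\<^bsub>opp_ring A\<^esub> x j
            \<in> lin_span (opp_ring A) R x n"
    then have "x i \<otimes>\<^bsub>A\<^esub> x j \<ominus>\<^bsub>A\<^esub> x j \<otimes>\<^bsub>A\<^esub> (x i \<otimes>\<^bsub>A\<^esub> c) \<in> S.LSo"
      by (simp add: S.LSo_eq)
    then have "\<exists>d\<in>R. d \<otimes>\<^bsub>A\<^esub> c = \<one>\<^bsub>A\<^esub> \<and> c \<otimes>\<^bsub>A\<^esub> d = \<one>\<^bsub>A\<^esub>"
      using h by (intro S.op_cunit) auto
    then show "\<exists>d\<in>R. c \<otimes>\<^bsub>opp_ring A\<^esub> d = \<one>\<^bsub>opp_ring A\<^esub> \<and> d \<otimes>\<^bsub>opp_ring A\<^esub> c = \<one>\<^bsub>opp_ring A\<^esub>"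
      by simp
  qed
  show ?thesis
    unfolding bijective_skew_PBW_def using part1 part2 part3 S.op_assoc by blast
qed


end
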